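(* Let $\mathcal A$ be an abelian category, let $M$ be an object and let $0\to F\to N\to C\to 0$ be a fully invariant short exact sequence in $\mathcal A$. Then: (1) $N$ is (strongly) $M$-$F$-split if and only if for every direct summand $M_1$ of $M$ and every direct summand $N_1$ of $N$, $N_1$ is (strongly) $M_1$-$(F\cap N_1)$-split. (2) $N$ is dual (strongly) $M$-$F$-split if and only if for every direct summand $M_1$ of $M$ and every direct summand $N_1$ of $N$, $N/N_1$ is dual (strongly) $M/M_1$-$((F+N_1)/N_1)$-split.
   Context: Convention: each statement containing parenthetical words holds in two versions: one obtained by deleting all parenthetical words and one obtained by keeping all of them. Let $\mathcal A$ be an abelian category. A morphism $s:X\to Y$ is a section if $ts=1_X$ for some $t$, and a retraction if $st=1_Y$ for some $t$. A monomorphism $i:K\to M$ is fully invariant if for every morphism $h:M\to M$ there is $\alpha:K\to K$ with $hi=i\alpha$; an epimorphism $d:M\to C$ is fully coinvariant if for every $h:M\to M$ there is $\beta:C\to C$ with $dh=\beta d$. A short exact sequence $0\to F\xrightarrow{i}N\xrightarrow{d}C\to 0$ is fully invariant if $i$ is fully invariant (equivalently $d$ is fully coinvariant). (For a direct summand $N_1$ of $N$, the inclusion $F\cap N_1\to N_1$ is fully invariant and $(F+N_1)/N_1$ is a fully invariant subobject of $N/N_1$, so the notions below apply.) For an object $M$ and a fully invariant short exact sequence $0\to F\xrightarrow{i}N\xrightarrow{d}C\to 0$: $N$ is (strongly) $M$-$F$-split if for every morphism $g:M\to N$, $\ker(dg)$ (equivalently the morphism $P\to M$ in the pullback of $i$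 along $g$) is a (fully invariant) section; $N$ is dual (strongly) $M$-$F$-split if for every morphism $g:N\to M$, $\mathrm{coker}(gi)$ (equivalently the morphism $M\to Q$ in the pushout of $d$ along $g$) is a (fully coinvariant) retraction. *)

theory Defs
  imports Main
begin

text \<open>Arrows carry domain and codomain; c_comp g f is the composite g after f.\<close>

record ('o, 'm) acat =
  c_ob   :: "'o set"
  c_ar   :: "'m set"
  c_dom  :: "'m \<Rightarrow> 'o"
  c_cod  :: "'m \<Rightarrow> 'o"
  c_comp :: "'m \<Rightarrow> 'm \<Rightarrow> 'm"
  c_id   :: "'o \<Rightarrow> 'm"
  c_add  :: "'m \<Rightarrow> 'm \<Rightarrow> 'm"
  c_neg  :: "'m \<Rightarrow> 'm"
  c_zero :: "'o \<Rightarrow> 'o \<Rightarrow> 'm"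

definition hom :: "('o, 'm) acat \<Rightarrow> 'o \<Rightarrow> 'o \<Rightarrow> 'm set" where
  "hom A X Y = {f \<in> c_ar A. c_dom A f = X \<and> c_cod A f = Y}"

definition is_category :: "('o, 'm) acat \<Rightarrow> bool" where
  "is_category A \<longleftrightarrow>
     (\<forall>f \<in> c_ar A. c_dom A f \<in> c_ob A \<and> c_cod A f \<in> c_ob A) \<and>
     (\<forall>X \<in> c_ob A. c_id A X \<in> hom A X X) \<and>
     (\<forall>X Y Z f g. f \<in> hom A X Y \<longrightarrow> g \<in> hom A Y Z \<longrightarrow> c_comp A g f \<in> hom A X Z) \<and>
     (\<forall>f \<in> c_ar A. c_comp A (c_id A (c_cod A f)) f = f \<and> c_comp A f (c_id A (c_dom A f)) = f) \<and>
     (\<forall>f g h. f \<in> c_ar A \<longrightarrow> g \<in> c_ar A \<longrightarrow> h \<in> c_ar A \<longrightarrow>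
        c_cod A f = c_dom A g \<longrightarrow> c_cod A g = c_dom A h \<longrightarrow>
        c_comp A h (c_comp A g f) = c_comp A (c_comp A h g) f)"

definition is_preadditive :: "('o, 'm) acat \<Rightarrow> bool" where
  "is_preadditive A \<longleftrightarrow> is_category A \<and>
     (\<forall>X \<in> c_ob A. \<forall>Y \<in> c_ob A. c_zero A X Y \<in> hom A X Y \<and>
        (\<forall>f \<in> hom A X Y. c_neg A f \<in> hom A X Y \<and>
            c_add A f (c_zero A X Y) = f \<and>
            c_add A f (c_neg A f) = c_zero A X Y \<and>
          (\<forall>g \<in> hom A X Y. c_add A f g \<in> hom A X Y \<and> c_add A f g = c_add A g f \<and>
            (\<forall>h \<in> hom A X Y. c_add A (c_add A f g) h = c_add A f (c_add A g h))))) \<and>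
     (\<forall>X Y Z f g h. f \<in> hom A X Y \<longrightarrow> g \<in> hom A X Y \<longrightarrow> h \<in> hom A Y Z \<longrightarrow>
        c_comp A h (c_add A f g) = c_add A (c_comp A h f) (c_comp A h g)) \<and>
     (\<forall>X Y Z f g k. f \<in> hom A Y Z \<longrightarrow> g \<in> hom A Y Z \<longrightarrow> k \<in> hom A X Y \<longrightarrow>
        c_comp A (c_add A f g) k = c_add A (c_comp A f k) (c_comp A g k))"

definition is_mono :: "('o, 'm) acat \<Rightarrow> 'm \<Rightarrow> bool" where
  "is_mono A m \<longleftrightarrow> m \<in> c_ar A \<and>
     (\<forall>g h. g \<in> c_ar A \<longrightarrow> h \<in> c_ar A \<longrightarrow> c_dom A g = c_dom A h \<longrightarrow>
        c_cod A g = c_dom A m \<longrightarrow> c_cod A h = c_dom A m \<longrightarrow>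
        c_comp A m g = c_comp A m h \<longrightarrow> g = h)"

definition is_epi :: "('o, 'm) acat \<Rightarrow> 'm \<Rightarrow> bool" where
  "is_epi A e \<longleftrightarrow> e \<in> c_ar A \<and>
     (\<forall>g h. g \<in> c_ar A \<longrightarrow> h \<in> c_ar A \<longrightarrow> c_cod A g = c_cod A h \<longrightarrow>
        c_dom A g = c_cod A e \<longrightarrow> c_dom A h = c_cod A e \<longrightarrow>
        c_comp A g e = c_comp A h e \<longrightarrow> g = h)"

definition is_kernel :: "('o, 'm) acat \<Rightarrow> 'm \<Rightarrow> 'm \<Rightarrow> bool" where
  "is_kernel A k f \<longleftrightarrow> f \<in> c_ar A \<and> k \<in> c_ar A \<and> c_cod A k = c_dom A f \<and>
     c_comp A f k = c_zero A (c_dom A k) (c_cod A f) \<and>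
     (\<forall>h \<in> c_ar A. c_cod A h = c_dom A f \<longrightarrow> c_comp A f h = c_zero A (c_dom A h) (c_cod A f) \<longrightarrow>
        (\<exists>!u. u \<in> hom A (c_dom A h) (c_dom A k) \<and> c_comp A k u = h))"

definition is_cokernel :: "('o, 'm) acat \<Rightarrow> 'm \<Rightarrow> 'm \<Rightarrow> bool" where
  "is_cokernel A c f \<longleftrightarrow> f \<in> c_ar A \<and> c \<in> c_ar A \<and> c_dom A c = c_cod A f \<and>
     c_comp A c f = c_zero A (c_dom A f) (c_cod A c) \<and>
     (\<forall>h \<in> c_ar A. c_dom A h = c_cod A f \<longrightarrow> c_comp A h f = c_zero A (c_dom A f) (c_cod A h) \<longrightarrow>
        (\<exists>!u. u \<in> hom A (c_cod A c) (c_cod A h) \<and> c_comp A u c = h))"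

definition is_pullback :: "('o, 'm) acat \<Rightarrow> 'm \<Rightarrow> 'm \<Rightarrow> 'm \<Rightarrow> 'm \<Rightarrow> bool" where
  "is_pullback A p1 p2 f g \<longleftrightarrow>
     p1 \<in> c_ar A \<and> p2 \<in> c_ar A \<and> f \<in> c_ar A \<and> g \<in> c_ar A \<and>
     c_dom A p1 = c_dom A p2 \<and> c_cod A p1 = c_dom A f \<and> c_cod A p2 = c_dom A g \<and>
     c_cod A f = c_cod A g \<and> c_comp A f p1 = c_comp A g p2 \<and>
     (\<forall>a \<in> c_ar A. \<forall>b \<in> c_ar A. c_dom A a = c_dom A b \<longrightarrow> c_cod A a = c_dom A f \<longrightarrow>
        c_cod A b = c_dom A g \<longrightarrow> c_comp A f a = c_comp A g b \<longrightarrow>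
        (\<exists>!u. u \<in> hom A (c_dom A a) (c_dom A p1) \<and> c_comp A p1 u = a \<and> c_comp A p2 u = b))"

definition abelian :: "('o, 'm) acat \<Rightarrow> bool" where
  "abelian A \<longleftrightarrow> is_preadditive A \<and>
     (\<exists>Z \<in> c_ob A. c_id A Z = c_zero A Z Z) \<and>
     (\<forall>X \<in> c_ob A. \<forall>Y \<in> c_ob A. \<exists>P p1 p2 e1 e2.
        p1 \<in> hom A P X \<and> p2 \<in> hom A P Y \<and> e1 \<in> hom A X P \<and> e2 \<in> hom A Y P \<and>
        c_comp A p1 e1 = c_id A X \<and> c_comp A p2 e2 = c_id A Y \<and>
        c_comp A p1 e2 = c_zero A Y X \<and> c_comp A p2 e1 = c_zero A X Y \<and>
        c_add A (c_comp A e1 p1) (c_comp A e2 p2) = c_id A P) \<and>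
     (\<forall>f \<in> c_ar A. \<exists>k. is_kernel A k f) \<and>
     (\<forall>f \<in> c_ar A. \<exists>c. is_cokernel A c f) \<and>
     (\<forall>m. is_mono A m \<longrightarrow> (\<exists>f. is_kernel A m f)) \<and>
     (\<forall>e. is_epi A e \<longrightarrow> (\<exists>f. is_cokernel A e f))"

definition is_section :: "('o, 'm) acat \<Rightarrow> 'm \<Rightarrow> bool" where
  "is_section A s \<longleftrightarrow> s \<in> c_ar A \<and>
     (\<exists>t \<in> hom A (c_cod A s) (c_dom A s). c_comp A t s = c_id A (c_dom A s))"

definition is_retraction :: "('o, 'm) acat \<Rightarrow> 'm \<Rightarrow> bool" where
  "is_retraction A s \<longleftrightarrow> s \<in> c_ar A \<and>
     (\<exists>t \<in> hom A (c_cod A s) (c_dom A s). c_comp A s t = c_id A (c_cod A s))"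

definition fully_invariant :: "('o, 'm) acat \<Rightarrow> 'm \<Rightarrow> bool" where
  "fully_invariant A i \<longleftrightarrow> is_mono A i \<and>
     (\<forall>h \<in> hom A (c_cod A i) (c_cod A i). \<exists>\<alpha> \<in> hom A (c_dom A i) (c_dom A i).
        c_comp A h i = c_comp A i \<alpha>)"

definition fully_coinvariant :: "('o, 'm) acat \<Rightarrow> 'm \<Rightarrow> bool" where
  "fully_coinvariant A d \<longleftrightarrow> is_epi A d \<and>
     (\<forall>h \<in> hom A (c_dom A d) (c_dom A d). \<exists>\<beta> \<in> hom A (c_cod A d) (c_cod A d).
        c_comp A d h = c_comp A \<beta> d)"

definition short_exact :: "('o, 'm) acat \<Rightarrow> 'm \<Rightarrow> 'm \<Rightarrow> bool" where
  "short_exact A i d \<longleftrightarrow> is_kernel A i d \<and> is_cokernel A d i"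

definition fi_short_exact :: "('o, 'm) acat \<Rightarrow> 'm \<Rightarrow> 'm \<Rightarrow> bool" where
  "fi_short_exact A i d \<longleftrightarrow> short_exact A i d \<and> fully_invariant A i"

text \<open>N = cod i = dom d is M-F-split w.r.t. the sequence 0 \<rightarrow> F --i--> N --d--> C \<rightarrow> 0.\<close>
definition MF_split :: "('o, 'm) acat \<Rightarrow> 'o \<Rightarrow> 'm \<Rightarrow> 'm \<Rightarrow> bool" where
  "MF_split A M i d \<longleftrightarrow>
     (\<forall>g \<in> hom A M (c_dom A d). \<forall>k. is_kernel A k (c_comp A d g) \<longrightarrow> is_section A k)"

definition strongly_MF_split :: "('o, 'm) acat \<Rightarrow> 'o \<Rightarrow> 'm \<Rightarrow> 'm \<Rightarrow> bool" where
  "strongly_MF_split A M i d \<longleftrightarrow>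
     (\<forall>g \<in> hom A M (c_dom A d). \<forall>k. is_kernel A k (c_comp A d g) \<longrightarrow>
        is_section A k \<and> fully_invariant A k)"

definition dual_MF_split :: "('o, 'm) acat \<Rightarrow> 'o \<Rightarrow> 'm \<Rightarrow> 'm \<Rightarrow> bool" where
  "dual_MF_split A M i d \<longleftrightarrow>
     (\<forall>g \<in> hom A (c_cod A i) M. \<forall>c. is_cokernel A c (c_comp A g i) \<longrightarrow> is_retraction A c)"

definition dual_strongly_MF_split :: "('o, 'm) acat \<Rightarrow> 'o \<Rightarrow> 'm \<Rightarrow> 'm \<Rightarrow> bool" where
  "dual_strongly_MF_split A M i d \<longleftrightarrow>
     (\<forall>g \<in> hom A (c_cod A i) M. \<forall>c. is_cokernel A c (c_comp A g i) \<longrightarrow>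
        is_retraction A c \<and> fully_coinvariant A c)"

text \<open>Right-hand side of part (1): for every direct summand M1 of M (given by a section
  s : M1 \<rightarrow> M) and every direct summand N1 of N (given by a section e : N1 \<rightarrow> N), with
  j : F \<inter> N1 \<rightarrow> N1 the pullback of i along e and d1 a cokernel of j, the predicate holds.\<close>
definition summand_cond :: "(('o, 'm) acat \<Rightarrow> 'o \<Rightarrow> 'm \<Rightarrow> 'm \<Rightarrow> bool) \<Rightarrow>
    ('o, 'm) acat \<Rightarrow> 'o \<Rightarrow> 'm \<Rightarrow> 'm \<Rightarrow> bool" where
  "summand_cond S A M i d \<longleftrightarrow>
     (\<forall>M1 s N1 e j' j d1.
        s \<in> hom A M1 M \<longrightarrow> is_section A s \<longrightarrow>
        e \<in> hom A N1 (c_cod A i) \<longrightarrow> is_section A e \<longrightarrow>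
        is_pullback A j' j i e \<longrightarrow> is_cokernel A d1 j \<longrightarrow>
        S A M1 j d1)"

text \<open>Right-hand side of part (2): with q_M : M \<rightarrow> M/M1 a cokernel of s, q : N \<rightarrow> N/N1 a cokernel
  of e, d' : N/N1 \<rightarrow> N/(F+N1) a cokernel of q i and i' : (F+N1)/N1 \<rightarrow> N/N1 a kernel of d',
  the predicate holds for the object M/M1 and the sequence (i', d').\<close>
definition quotient_cond :: "(('o, 'm) acat \<Rightarrow> 'o \<Rightarrow> 'm \<Rightarrow> 'm \<Rightarrow> bool) \<Rightarrow>
    ('o, 'm) acat \<Rightarrow> 'o \<Rightarrow> 'm \<Rightarrow> 'm \<Rightarrow> bool" where
  "quotient_cond S A M i d \<longleftrightarrow>
     (\<forall>M1 s qM N1 e q d' i'.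
        s \<in> hom A M1 M \<longrightarrow> is_section A s \<longrightarrow> is_cokernel A qM s \<longrightarrow>
        e \<in> hom A N1 (c_cod A i) \<longrightarrow> is_section A e \<longrightarrow> is_cokernel A q e \<longrightarrow>
        is_cokernel A d' (c_comp A q i) \<longrightarrow> is_kernel A i' d' \<longrightarrow>
        S A (c_cod A qM) i' d')"

end

theory Submission
  imports Defs
begin

locale pre =
  fixes A :: "('o,'m) acat"
  assumes pa: "is_preadditive A"
begin

abbreviation cp (infixr "\<cdot>" 55) where "g \<cdot> f \<equiv> c_comp A g f"
abbreviation zr ("\<zero>") where "\<zero> \<equiv> c_zero A"

lemma pa': "is_category A \<and>
     (\<forall>X \<in> c_ob A. \<forall>Y \<in> c_ob A. c_zero A X Y \<in> hom A X Y \<and>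
        (\<forall>f \<in> hom A X Y. c_neg A f \<in> hom A X Y \<and>
            c_add A f (c_zero A X Y) = f \<and>
            c_add A f (c_neg A f) = c_zero A X Y \<and>
          (\<forall>g \<in> hom A X Y. c_add A f g \<in> hom A X Y \<and> c_add A f g = c_add A g f \<and>
            (\<forall>h \<in> hom A X Y. c_add A (c_add A f g) h = c_add A f (c_add A g h))))) \<and>
     (\<forall>X Y Z f g h. f \<in> hom A X Y \<longrightarrow> g \<in> hom A X Y \<longrightarrow> h \<in> hom A Y Z \<longrightarrow>
        c_comp A h (c_add A f g) = c_add A (c_comp A h f) (c_comp A h g)) \<and>
     (\<forall>X Y Z f g k. f \<in> hom A Y Z \<longrightarrow> g \<in> hom A Y Z \<longrightarrow> k \<in> hom A X Y \<longrightarrow>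
        c_comp A (c_add A f g) k = c_add A (c_comp A f k) (c_comp A g k))"
  using pa unfolding is_preadditive_def .

lemma cat: "is_category A" using conjunct1[OF pa'] .

lemma cat': "(\<forall>f \<in> c_ar A. c_dom A f \<in> c_ob A \<and> c_cod A f \<in> c_ob A) \<and>
     (\<forall>X \<in> c_ob A. c_id A X \<in> hom A X X) \<and>
     (\<forall>X Y Z f g. f \<in> hom A X Y \<longrightarrow> g \<in> hom A Y Z \<longrightarrow> c_comp A g f \<in> hom A X Z) \<and>
     (\<forall>f \<in> c_ar A. c_comp A (c_id A (c_cod A f)) f = f \<and> c_comp A f (c_id A (c_dom A f)) = f) \<and>
     (\<forall>f g h. f \<in> c_ar A \<longrightarrow> g \<in> c_ar A \<longrightarrow> h \<in> c_ar A \<longrightarrow>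
        c_cod A f = c_dom A g \<longrightarrow> c_cod A g = c_dom A h \<longrightarrow>
        c_comp A h (c_comp A g f) = c_comp A (c_comp A h g) f)"
  using cat unfolding is_category_def .

lemmas C1 = conjunct1[OF cat', rule_format]
lemmas C2 = conjunct1[OF conjunct2[OF cat'], rule_format]
lemmas C3 = conjunct1[OF conjunct2[OF conjunct2[OF cat']], rule_format]
lemmas C4 = conjunct1[OF conjunct2[OF conjunct2[OF conjunct2[OF cat']]], rule_format]
lemmas C5 = conjunct2[OF conjunct2[OF conjunct2[OF conjunct2[OF cat']]], rule_format]
lemmas P1 = conjunct1[OF conjunct2[OF pa'], rule_format]
lemmas P2 = conjunct1[OF conjunct2[OF conjunct2[OF pa']], rule_format]
lemmas P3 = conjunct2[OF conjunct2[OF conjunct2[OF pa']], rule_format]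

lemma homI: "f \<in> c_ar A \<Longrightarrow> c_dom A f = X \<Longrightarrow> c_cod A f = Y \<Longrightarrow> f \<in> hom A X Y"
  unfolding hom_def by simp

lemma homD: "f \<in> hom A X Y \<Longrightarrow> f \<in> c_ar A \<and> c_dom A f = X \<and> c_cod A f = Y"
  unfolding hom_def by simp

lemma ar_hom: "f \<in> c_ar A \<Longrightarrow> f \<in> hom A (c_dom A f) (c_cod A f)"
  unfolding hom_def by simp

lemma hom_ob: "f \<in> hom A X Y \<Longrightarrow> X \<in> c_ob A \<and> Y \<in> c_ob A"
proof -
  assume f: "f \<in> hom A X Y"
  then have "f \<in> c_ar A" "c_dom A f = X" "c_cod A f = Y" using homD by auto
  then show ?thesis using C1[of f] by simp
qed

lemma comp_hom: "f \<in> hom A X Y \<Longrightarrow> g \<in> hom A Y Z \<Longrightarrow> g \<cdot> f \<in> hom A X Z"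
  by (rule C3)

lemma id_hom: "X \<in> c_ob A \<Longrightarrow> c_id A X \<in> hom A X X"
  by (rule C2)

lemma id_l: "f \<in> hom A X Y \<Longrightarrow> c_id A Y \<cdot> f = f"
  using C4[of f] homD[of f X Y] by auto

lemma id_r: "f \<in> hom A X Y \<Longrightarrow> f \<cdot> c_id A X = f"
  using C4[of f] homD[of f X Y] by auto

lemma assoc: "f \<in> hom A X Y \<Longrightarrow> g \<in> hom A Y Z \<Longrightarrow> h \<in> hom A Z W \<Longrightarrow> h \<cdot> (g \<cdot> f) = (h \<cdot> g) \<cdot> f"
  using C5[of f g h] homD[of f X Y] homD[of g Y Z] homD[of h Z W] by auto

lemma zero_hom: "X \<in> c_ob A \<Longrightarrow> Y \<in> c_ob A \<Longrightarrow> \<zero> X Y \<in> hom A X Y"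
  using P1[of X Y] by simp

lemma PP: "f \<in> hom A X Y \<Longrightarrow> c_neg A f \<in> hom A X Y \<and>
            c_add A f (c_zero A X Y) = f \<and>
            c_add A f (c_neg A f) = c_zero A X Y \<and>
          (\<forall>g \<in> hom A X Y. c_add A f g \<in> hom A X Y \<and> c_add A f g = c_add A g f \<and>
            (\<forall>h \<in> hom A X Y. c_add A (c_add A f g) h = c_add A f (c_add A g h)))"
proof -
  assume f: "f \<in> hom A X Y"
  then have X: "X \<in> c_ob A" and Y: "Y \<in> c_ob A" using hom_ob by auto
  show ?thesis by (rule bspec[OF conjunct2[OF P1[OF X Y]] f])
qed

lemma add_hom: "f \<in> hom A X Y \<Longrightarrow> g \<in> hom A X Y \<Longrightarrow> c_add A f g \<in> hom A X Y"
  using PP[of f X Y] by blast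

lemma neg_hom: "f \<in> hom A X Y \<Longrightarrow> c_neg A f \<in> hom A X Y"
  using PP[of f X Y] by blast

lemma add_zero: "f \<in> hom A X Y \<Longrightarrow> c_add A f (\<zero> X Y) = f"
  using PP[of f X Y] by blast

lemma add_neg: "f \<in> hom A X Y \<Longrightarrow> c_add A f (c_neg A f) = \<zero> X Y"
  using PP[of f X Y] by blast

lemma add_comm: "f \<in> hom A X Y \<Longrightarrow> g \<in> hom A X Y \<Longrightarrow> c_add A f g = c_add A g f"
  using PP[of f X Y] by blast

lemma add_assoc: "f \<in> hom A X Y \<Longrightarrow> g \<in> hom A X Y \<Longrightarrow> h \<in> hom A X Y \<Longrightarrow>
   c_add A (c_add A f g) h = c_add A f (c_add A g h)"
  using PP[of f X Y] by blast

lemma distl: "f \<in> hom A X Y \<Longrightarrow> g \<in> hom A X Y \<Longrightarrow> h \<in> hom A Y Z \<Longrightarrow>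
   h \<cdot> c_add A f g = c_add A (h \<cdot> f) (h \<cdot> g)"
  by (rule P2)

lemma distr: "f \<in> hom A Y Z \<Longrightarrow> g \<in> hom A Y Z \<Longrightarrow> k \<in> hom A X Y \<Longrightarrow>
   c_add A f g \<cdot> k = c_add A (f \<cdot> k) (g \<cdot> k)"
  by (rule P3)

lemma idem_zero: assumes z: "z \<in> hom A X Y" and e: "c_add A z z = z" shows "z = \<zero> X Y"
proof -
  have "\<zero> X Y = c_add A z (c_neg A z)" using add_neg[OF z] by simp
  also have "\<dots> = c_add A (c_add A z z) (c_neg A z)" using e by simp
  also have "\<dots> = c_add A z (c_add A z (c_neg A z))" using add_assoc z neg_hom by blast
  also have "\<dots> = z" using add_neg[OF z] add_zero[OF z] by simp
  finally show ?thesis by simp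
qed

lemma zero_comp: assumes f: "f \<in> hom A X Y" and Z: "Z \<in> c_ob A" shows "\<zero> Y Z \<cdot> f = \<zero> X Z"
proof -
  have Y: "Y \<in> c_ob A" using hom_ob f by blast
  have z0: "\<zero> Y Z \<in> hom A Y Z" using zero_hom Y Z by blast
  have h: "\<zero> Y Z \<cdot> f \<in> hom A X Z" using comp_hom f z0 by blast
  have "c_add A (\<zero> Y Z \<cdot> f) (\<zero> Y Z \<cdot> f) = c_add A (\<zero> Y Z) (\<zero> Y Z) \<cdot> f"
    using distr[OF z0 z0 f] by simp
  also have "\<dots> = \<zero> Y Z \<cdot> f" using add_zero[OF z0] by simp
  finally show ?thesis using idem_zero[OF h] by simp
qed

lemma comp_zero: assumes g: "g \<in> hom A Y Z" and X: "X \<in> c_ob A" shows "g \<cdot> \<zero> X Y = \<zero> X Z"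
proof -
  have Y: "Y \<in> c_ob A" using hom_ob g by blast
  have z0: "\<zero> X Y \<in> hom A X Y" using zero_hom Y X by blast
  have h: "g \<cdot> \<zero> X Y \<in> hom A X Z" using comp_hom g z0 by blast
  have "c_add A (g \<cdot> \<zero> X Y) (g \<cdot> \<zero> X Y) = g \<cdot> c_add A (\<zero> X Y) (\<zero> X Y)"
    using distl[OF z0 z0 g] by simp
  also have "\<dots> = g \<cdot> \<zero> X Y" using add_zero[OF z0] by simp
  finally show ?thesis using idem_zero[OF h] by simp
qed

lemma neg_comp: assumes b: "b \<in> hom A Y Z" and s: "s \<in> hom A X Y"
  shows "c_neg A b \<cdot> s = c_neg A (b \<cdot> s)"
proof -
  have Z: "Z \<in> c_ob A" and X: "X \<in> c_ob A" using hom_ob b s by blast+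
  have nb: "c_neg A b \<in> hom A Y Z" using neg_hom b by blast
  have bs: "b \<cdot> s \<in> hom A X Z" and nbs: "c_neg A b \<cdot> s \<in> hom A X Z" using comp_hom b s nb by blast+
  have nbs2: "c_neg A (b \<cdot> s) \<in> hom A X Z" using neg_hom bs by blast
  have e: "c_add A (b \<cdot> s) (c_neg A b \<cdot> s) = \<zero> X Z"
    using distr[OF b nb s] add_neg[OF b] zero_comp[OF s Z] by simp
  have "c_neg A b \<cdot> s = c_add A (c_neg A b \<cdot> s) (\<zero> X Z)" using add_zero[OF nbs] by simp
  also have "\<dots> = c_add A (c_neg A b \<cdot> s) (c_add A (b \<cdot> s) (c_neg A (b \<cdot> s)))" using add_neg[OF bs] by simp
  also have "\<dots> = c_add A (c_add A (c_neg A b \<cdot> s) (b \<cdot> s)) (c_neg A (b \<cdot> s))"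
    using add_assoc[OF nbs bs nbs2] by simp
  also have "\<dots> = c_add A (\<zero> X Z) (c_neg A (b \<cdot> s))" using e add_comm[OF nbs bs] by simp
  also have "\<dots> = c_neg A (b \<cdot> s)" using add_zero[OF nbs2] add_comm[OF nbs2 zero_hom[OF X Z]] by simp
  finally show ?thesis .
qed


lemma comp_neg: assumes b: "b \<in> hom A X Y" and q: "q \<in> hom A Y Z"
  shows "q \<cdot> c_neg A b = c_neg A (q \<cdot> b)"
proof -
  have Z: "Z \<in> c_ob A" and X: "X \<in> c_ob A" using hom_ob b q by blast+
  have nb: "c_neg A b \<in> hom A X Y" using neg_hom b by blast
  have bs: "q \<cdot> b \<in> hom A X Z" and nbs: "q \<cdot> c_neg A b \<in> hom A X Z" using comp_hom q b nb by blast+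
  have nbs2: "c_neg A (q \<cdot> b) \<in> hom A X Z" using neg_hom bs by blast
  have e: "c_add A (q \<cdot> b) (q \<cdot> c_neg A b) = \<zero> X Z"
    using distl[OF b nb q] add_neg[OF b] comp_zero[OF q X] by simp
  have "q \<cdot> c_neg A b = c_add A (q \<cdot> c_neg A b) (\<zero> X Z)" using add_zero[OF nbs] by simp
  also have "\<dots> = c_add A (q \<cdot> c_neg A b) (c_add A (q \<cdot> b) (c_neg A (q \<cdot> b)))" using add_neg[OF bs] by simp
  also have "\<dots> = c_add A (c_add A (q \<cdot> c_neg A b) (q \<cdot> b)) (c_neg A (q \<cdot> b))"
    using add_assoc[OF nbs bs nbs2] by simp
  also have "\<dots> = c_add A (\<zero> X Z) (c_neg A (q \<cdot> b))" using e add_comm[OF nbs bs] by simp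
  also have "\<dots> = c_neg A (q \<cdot> b)" using add_zero[OF nbs2] add_comm[OF nbs2 zero_hom[OF X Z]] by simp
  finally show ?thesis .
qed

lemma neg_zero: assumes X: "X \<in> c_ob A" and Y: "Y \<in> c_ob A" shows "c_neg A (\<zero> X Y) = \<zero> X Y"
proof -
  have z: "\<zero> X Y \<in> hom A X Y" using zero_hom X Y by blast
  have n: "c_neg A (\<zero> X Y) \<in> hom A X Y" using neg_hom z by blast
  have "c_neg A (\<zero> X Y) = c_add A (c_neg A (\<zero> X Y)) (\<zero> X Y)" using add_zero[OF n] by simp
  also have "\<dots> = c_add A (\<zero> X Y) (c_neg A (\<zero> X Y))" using add_comm[OF n z] by simp
  also have "\<dots> = \<zero> X Y" using add_neg[OF z] by simp
  finally show ?thesis .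
qed

lemma ex1_uniq: "\<exists>!x. P x \<Longrightarrow> P a \<Longrightarrow> P b \<Longrightarrow> a = b" by (erule ex1E) blast

lemma ex1_bex: "\<exists>!u. u \<in> S \<and> Q u \<Longrightarrow> \<exists>u\<in>S. Q u" by (erule ex1E) blast

lemma kerB: "is_kernel A k f \<Longrightarrow> f \<in> c_ar A \<and> k \<in> c_ar A \<and> c_cod A k = c_dom A f \<and>
     c_comp A f k = c_zero A (c_dom A k) (c_cod A f)"
  unfolding is_kernel_def by (elim conjE) (intro conjI)
lemma kerU: "is_kernel A k f \<Longrightarrow> h \<in> c_ar A \<Longrightarrow> c_cod A h = c_dom A f \<Longrightarrow>
    c_comp A f h = c_zero A (c_dom A h) (c_cod A f) \<Longrightarrow>
        (\<exists>!u. u \<in> hom A (c_dom A h) (c_dom A k) \<and> c_comp A k u = h)"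
  unfolding is_kernel_def by (elim conjE) (drule bspec, assumption, drule mp, assumption, drule mp, assumption)
lemma cokB: "is_cokernel A c f \<Longrightarrow> f \<in> c_ar A \<and> c \<in> c_ar A \<and> c_dom A c = c_cod A f \<and>
     c_comp A c f = c_zero A (c_dom A f) (c_cod A c)"
  unfolding is_cokernel_def by (elim conjE) (intro conjI)
lemma cokU: "is_cokernel A c f \<Longrightarrow> h \<in> c_ar A \<Longrightarrow> c_dom A h = c_cod A f \<Longrightarrow>
     c_comp A h f = c_zero A (c_dom A f) (c_cod A h) \<Longrightarrow>
        (\<exists>!u. u \<in> hom A (c_cod A c) (c_cod A h) \<and> c_comp A u c = h)"
  unfolding is_cokernel_def by (elim conjE) (drule bspec, assumption, drule mp, assumption, drule mp, assumption)

lemma ker_homs: "is_kernel A k f \<Longrightarrow> k \<in> hom A (c_dom A k) (c_dom A f) \<and> f \<in> hom A (c_dom A f) (c_cod A f)"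
  using kerB[of k f] unfolding hom_def by simp

lemma cok_homs: "is_cokernel A c f \<Longrightarrow> c \<in> hom A (c_cod A f) (c_cod A c) \<and> f \<in> hom A (c_dom A f) (c_cod A f)"
  using cokB[of c f] unfolding hom_def by simp

lemma ker_codeq: "is_kernel A k f \<Longrightarrow> c_cod A k = c_dom A f"
  using kerB by blast
lemma cok_domeq: "is_cokernel A c f \<Longrightarrow> c_dom A c = c_cod A f"
  using cokB by blast
lemma ker_hom3: "is_kernel A k f \<Longrightarrow> c_cod A k = X \<Longrightarrow> f \<in> hom A X (c_cod A f)"
  using kerB[of k f] unfolding hom_def by simp
lemma cok_hom2: "is_cokernel A c f \<Longrightarrow> f \<in> hom A X Y \<Longrightarrow> c \<in> hom A Y (c_cod A c)"
  using cokB[of c f] unfolding hom_def by simp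

lemma ker_factor: assumes k: "is_kernel A k f" and h: "h \<in> hom A X (c_dom A f)"
  and z: "f \<cdot> h = \<zero> X (c_cod A f)"
  shows "\<exists>u \<in> hom A X (c_dom A k). k \<cdot> u = h"
proof -
  have hh: "h \<in> c_ar A" "c_cod A h = c_dom A f" "c_dom A h = X" using homD[OF h] by auto
  have "\<exists>!u. u \<in> hom A (c_dom A h) (c_dom A k) \<and> k \<cdot> u = h"
    using kerU[OF k hh(1,2)] z hh(3) by simp
  then show ?thesis using hh(3) ex1_bex by simp
qed

lemma ker_zero: assumes k: "is_kernel A k f" shows "f \<cdot> k = \<zero> (c_dom A k) (c_cod A f)"
  using kerB[OF k] by blast

lemma cok_zero: assumes k: "is_cokernel A c f" shows "c \<cdot> f = \<zero> (c_dom A f) (c_cod A c)"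
  using cokB[OF k] by blast

lemma ker_uniq: assumes k: "is_kernel A k f" and u: "u \<in> hom A X (c_dom A k)" and v: "v \<in> hom A X (c_dom A k)"
  and e: "k \<cdot> u = k \<cdot> v" shows "u = v"
proof -
  have kh: "k \<in> hom A (c_dom A k) (c_dom A f)" and fh: "f \<in> hom A (c_dom A f) (c_cod A f)"
    using ker_homs[OF k] by blast+
  have ku: "k \<cdot> u \<in> hom A X (c_dom A f)" using comp_hom u kh by blast
  have "f \<cdot> (k \<cdot> u) = (f \<cdot> k) \<cdot> u" using assoc[OF u kh fh] .
  also have "\<dots> = \<zero> X (c_cod A f)" using ker_zero[OF k] zero_comp[OF u conjunct2[OF hom_ob[OF fh]]] by simp
  finally have z: "f \<cdot> (k \<cdot> u) = \<zero> X (c_cod A f)" .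
  have hk: "k \<cdot> u \<in> c_ar A" "c_cod A (k \<cdot> u) = c_dom A f" "c_dom A (k \<cdot> u) = X" using homD[OF ku] by auto
  have U: "\<exists>!w. w \<in> hom A X (c_dom A k) \<and> k \<cdot> w = k \<cdot> u"
    using kerU[OF k hk(1,2)] z hk(3) by simp
  have Pu: "u \<in> hom A X (c_dom A k) \<and> k \<cdot> u = k \<cdot> u" using u by simp
  have Pv: "v \<in> hom A X (c_dom A k) \<and> k \<cdot> v = k \<cdot> u" using v e by simp
  show ?thesis by (rule ex1_uniq[OF U Pu Pv])
qed

lemma cok_factor: assumes c: "is_cokernel A c f" and h: "h \<in> hom A (c_cod A f) X"
  and z: "h \<cdot> f = \<zero> (c_dom A f) X"
  shows "\<exists>u \<in> hom A (c_cod A c) X. u \<cdot> c = h"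
proof -
  have hh: "h \<in> c_ar A" "c_dom A h = c_cod A f" "c_cod A h = X" using homD[OF h] by auto
  have "\<exists>!u. u \<in> hom A (c_cod A c) (c_cod A h) \<and> u \<cdot> c = h"
    using cokU[OF c hh(1,2)] z hh(3) by simp
  then show ?thesis using hh(3) ex1_bex by simp
qed

lemma cok_uniq: assumes c: "is_cokernel A c f" and u: "u \<in> hom A (c_cod A c) X" and v: "v \<in> hom A (c_cod A c) X"
  and e: "u \<cdot> c = v \<cdot> c" shows "u = v"
proof -
  have ch: "c \<in> hom A (c_cod A f) (c_cod A c)" and fh: "f \<in> hom A (c_dom A f) (c_cod A f)"
    using cok_homs[OF c] by blast+
  have uc: "u \<cdot> c \<in> hom A (c_cod A f) X" using comp_hom u ch by blast
  have "(u \<cdot> c) \<cdot> f = u \<cdot> (c \<cdot> f)" using assoc[OF fh ch u] by simp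
  also have "\<dots> = \<zero> (c_dom A f) X" using cok_zero[OF c] comp_zero[OF u conjunct1[OF hom_ob[OF fh]]] by simp
  finally have z: "(u \<cdot> c) \<cdot> f = \<zero> (c_dom A f) X" .
  have hc: "u \<cdot> c \<in> c_ar A" "c_dom A (u \<cdot> c) = c_cod A f" "c_cod A (u \<cdot> c) = X" using homD[OF uc] by auto
  have U: "\<exists>!w. w \<in> hom A (c_cod A c) X \<and> w \<cdot> c = u \<cdot> c"
    using cokU[OF c hc(1,2)] z hc(3) by simp
  have Pu: "u \<in> hom A (c_cod A c) X \<and> u \<cdot> c = u \<cdot> c" using u by simp
  have Pv: "v \<in> hom A (c_cod A c) X \<and> v \<cdot> c = u \<cdot> c" using v e by simp
  show ?thesis by (rule ex1_uniq[OF U Pu Pv])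
qed

lemma ker_mono: assumes k: "is_kernel A k f" shows "is_mono A k"
  unfolding is_mono_def
proof (intro conjI allI impI)
  show "k \<in> c_ar A" using kerB[OF k] by blast
  fix g h assume a: "g \<in> c_ar A" "h \<in> c_ar A" "c_dom A g = c_dom A h" "c_cod A g = c_dom A k"
    "c_cod A h = c_dom A k" "k \<cdot> g = k \<cdot> h"
  have "g \<in> hom A (c_dom A g) (c_dom A k)" "h \<in> hom A (c_dom A g) (c_dom A k)" using a homI by auto
  then show "g = h" using ker_uniq[OF k] a(6) by blast
qed

lemma cok_epi: assumes c: "is_cokernel A c f" shows "is_epi A c"
  unfolding is_epi_def
proof (intro conjI allI impI)
  show "c \<in> c_ar A" using cokB[OF c] by blast
  fix g h assume a: "g \<in> c_ar A" "h \<in> c_ar A" "c_cod A g = c_cod A h" "c_dom A g = c_cod A c"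
    "c_dom A h = c_cod A c" "g \<cdot> c = h \<cdot> c"
  have "g \<in> hom A (c_cod A c) (c_cod A g)" "h \<in> hom A (c_cod A c) (c_cod A g)" using a homI by auto
  then show "g = h" using cok_uniq[OF c] a(6) by blast
qed

end

locale ab = pre +
  assumes ab: "abelian A"
begin

lemma abD: "(\<forall>f \<in> c_ar A. \<exists>k. is_kernel A k f) \<and>
     (\<forall>f \<in> c_ar A. \<exists>c. is_cokernel A c f) \<and>
     (\<forall>m. is_mono A m \<longrightarrow> (\<exists>f. is_kernel A m f)) \<and>
     (\<forall>e. is_epi A e \<longrightarrow> (\<exists>f. is_cokernel A e f))"
  using conjunct2[OF conjunct2[OF conjunct2[OF ab[unfolded abelian_def]]]] .
lemma abZ: "\<exists>Z \<in> c_ob A. c_id A Z = c_zero A Z Z"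
  using conjunct1[OF conjunct2[OF ab[unfolded abelian_def]]] .

lemma mono_ker: "is_mono A m \<Longrightarrow> \<exists>f. is_kernel A m f"
  using abD by blast
lemma epi_cok: "is_epi A m \<Longrightarrow> \<exists>f. is_cokernel A m f"
  using abD by blast
lemma ex_ker: "f \<in> c_ar A \<Longrightarrow> \<exists>k. is_kernel A k f"
  using abD by blast
lemma ex_cok: "f \<in> c_ar A \<Longrightarrow> \<exists>k. is_cokernel A k f"
  using abD by blast

lemma mono_cancel: "is_mono A m \<Longrightarrow> g \<in> hom A X (c_dom A m) \<Longrightarrow> h \<in> hom A X (c_dom A m) \<Longrightarrow>
  m \<cdot> g = m \<cdot> h \<Longrightarrow> g = h"
  unfolding is_mono_def hom_def by auto

lemma pb_homs: assumes pb: "is_pullback A j' j i e"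
  shows "j' \<in> hom A (c_dom A j) (c_dom A i) \<and> j \<in> hom A (c_dom A j) (c_dom A e) \<and>
         i \<in> hom A (c_dom A i) (c_cod A i) \<and> e \<in> hom A (c_dom A e) (c_cod A i) \<and> i \<cdot> j' = e \<cdot> j"
  using pb unfolding is_pullback_def hom_def by auto


lemma pb_univ: "is_pullback A p1 p2 f g \<Longrightarrow> a \<in> c_ar A \<Longrightarrow> b \<in> c_ar A \<Longrightarrow> c_dom A a = c_dom A b \<Longrightarrow>
    c_cod A a = c_dom A f \<Longrightarrow> c_cod A b = c_dom A g \<Longrightarrow> c_comp A f a = c_comp A g b \<Longrightarrow>
    (\<exists>!u. u \<in> hom A (c_dom A a) (c_dom A p1) \<and> c_comp A p1 u = a \<and> c_comp A p2 u = b)"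
  unfolding is_pullback_def by blast

lemma pb_factor: assumes pb: "is_pullback A j' j i e" and a: "a \<in> hom A X (c_dom A i)"
  and b: "b \<in> hom A X (c_dom A e)" and c: "i \<cdot> a = e \<cdot> b"
  shows "\<exists>u. u \<in> hom A X (c_dom A j) \<and> j' \<cdot> u = a \<and> j \<cdot> u = b"
proof -
  have h: "a \<in> c_ar A" "b \<in> c_ar A" "c_dom A a = X" "c_dom A b = X" "c_cod A a = c_dom A i" "c_cod A b = c_dom A e"
    using homD a b by auto
  have "\<exists>!u. u \<in> hom A (c_dom A a) (c_dom A j') \<and> j' \<cdot> u = a \<and> j \<cdot> u = b"
    using pb_univ[OF pb h(1,2) _ h(5,6) c] h(3,4) by simp
  moreover have "c_dom A j' = c_dom A j" using pb unfolding is_pullback_def by auto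
  ultimately show ?thesis using h(3) by auto
qed

lemma pb_mono: assumes pb: "is_pullback A j' j i e" and im: "is_mono A i" shows "is_mono A j"
  unfolding is_mono_def
proof (intro conjI allI impI)
  show "j \<in> c_ar A" using pb unfolding is_pullback_def by blast
  fix g h assume g0: "g \<in> c_ar A" and h0: "h \<in> c_ar A" and dd: "c_dom A g = c_dom A h"
    and cg: "c_cod A g = c_dom A j" and ch: "c_cod A h = c_dom A j" and eq: "j \<cdot> g = j \<cdot> h"
  define Q where "Q = c_dom A g"
  have g: "g \<in> hom A Q (c_dom A j)" and h: "h \<in> hom A Q (c_dom A j)" using g0 h0 dd cg ch Q_def homI by auto
  have H: "j' \<in> hom A (c_dom A j) (c_dom A i)" "j \<in> hom A (c_dom A j) (c_dom A e)"
         "i \<in> hom A (c_dom A i) (c_cod A i)" "e \<in> hom A (c_dom A e) (c_cod A i)" "i \<cdot> j' = e \<cdot> j"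
    using pb_homs[OF pb] by auto
  have "i \<cdot> (j' \<cdot> g) = e \<cdot> (j \<cdot> g)" using assoc[OF g H(1) H(3)] assoc[OF g H(2) H(4)] H(5) by simp
  also have "\<dots> = e \<cdot> (j \<cdot> h)" using eq by simp
  also have "\<dots> = i \<cdot> (j' \<cdot> h)" using assoc[OF h H(1) H(3)] assoc[OF h H(2) H(4)] H(5) by simp
  finally have "j' \<cdot> g = j' \<cdot> h" using mono_cancel[OF im] comp_hom g h H(1) by blast
  have U: "\<exists>!u. u \<in> hom A (c_dom A (j \<cdot> g)) (c_dom A j') \<and> j' \<cdot> u = j' \<cdot> g \<and> j \<cdot> u = j \<cdot> g"
  proof -
    have jg: "j \<cdot> g \<in> hom A Q (c_dom A e)" and jg': "j' \<cdot> g \<in> hom A Q (c_dom A i)" using comp_hom g H by blast+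
    have "i \<cdot> (j' \<cdot> g) = e \<cdot> (j \<cdot> g)" using assoc[OF g H(1) H(3)] assoc[OF g H(2) H(4)] H(5) by simp
    then have "\<exists>!u. u \<in> hom A (c_dom A (j' \<cdot> g)) (c_dom A j') \<and> j' \<cdot> u = j' \<cdot> g \<and> j \<cdot> u = j \<cdot> g"
      by (intro pb_univ[OF pb]) (use homD[OF jg] homD[OF jg'] in auto)
    then show ?thesis using homD[OF jg] homD[OF jg'] by simp
  qed
  have d1: "c_dom A (j \<cdot> g) = Q" using homD[OF comp_hom[OF g H(2)]] by simp
  have d2: "c_dom A j' = c_dom A j" using homD[OF H(1)] by simp
  have U': "\<exists>!u. u \<in> hom A Q (c_dom A j) \<and> j' \<cdot> u = j' \<cdot> g \<and> j \<cdot> u = j \<cdot> g" using U d1 d2 by simp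
  have Pg: "g \<in> hom A Q (c_dom A j) \<and> j' \<cdot> g = j' \<cdot> g \<and> j \<cdot> g = j \<cdot> g" using g by simp
  have Ph: "h \<in> hom A Q (c_dom A j) \<and> j' \<cdot> h = j' \<cdot> g \<and> j \<cdot> h = j \<cdot> g" using h eq \<open>j' \<cdot> g = j' \<cdot> h\<close> by simp
  show "g = h" using ex1_uniq[OF U' Pg Ph] .
qed

lemma keq:
  assumes se: "short_exact A i d" and pb: "is_pullback A j' j i e" and ck: "is_cokernel A d1 j"
    and y: "y \<in> hom A X (c_dom A e)"
  shows "d1 \<cdot> y = \<zero> X (c_cod A d1) \<longleftrightarrow> d \<cdot> (e \<cdot> y) = \<zero> X (c_cod A d)"
proof -
  have ki: "is_kernel A i d" using se unfolding short_exact_def by blast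
  have H: "j' \<in> hom A (c_dom A j) (c_dom A i)" "j \<in> hom A (c_dom A j) (c_dom A e)"
         "i \<in> hom A (c_dom A i) (c_cod A i)" "e \<in> hom A (c_dom A e) (c_cod A i)" "i \<cdot> j' = e \<cdot> j"
    using pb_homs[OF pb] by auto
  have dh: "d \<in> hom A (c_cod A i) (c_cod A d)" by (rule ker_hom3[OF ki]) simp
  have d1h: "d1 \<in> hom A (c_dom A e) (c_cod A d1)" using cok_hom2[OF ck H(2)] .
  have X: "X \<in> c_ob A" using hom_ob y by blast
  have ey: "e \<cdot> y \<in> hom A X (c_cod A i)" using comp_hom y H(4) by blast
  show ?thesis
  proof
    assume z: "d1 \<cdot> y = \<zero> X (c_cod A d1)"
    have jm: "is_mono A j" using pb_mono[OF pb ker_mono[OF ki]] .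
    obtain f where kf: "is_kernel A j f" using mono_ker[OF jm] by blast
    have fh: "f \<in> hom A (c_dom A e) (c_cod A f)" by (rule ker_hom3[OF kf]) (use homD[OF H(2)] in simp)
    have fz: "f \<cdot> j = \<zero> (c_dom A j) (c_cod A f)" using ker_zero[OF kf] .
    have jc: "c_cod A j = c_dom A e" using homD[OF H(2)] by blast
    obtain w where w: "w \<in> hom A (c_cod A d1) (c_cod A f)" and wd: "w \<cdot> d1 = f"
      using cok_factor[OF ck, of f "c_cod A f"] fh fz jc homD[OF H(2)] by auto
    have "f \<cdot> y = w \<cdot> (d1 \<cdot> y)" using assoc[OF y d1h w] wd by simp
    also have "\<dots> = \<zero> X (c_cod A f)" using z comp_zero[OF w X] by simp
    finally have "f \<cdot> y = \<zero> X (c_cod A f)" .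
    then obtain u where u: "u \<in> hom A X (c_dom A j)" and ju: "j \<cdot> u = y"
      using ker_factor[OF kf, of y X] y jc ker_codeq[OF kf] by auto
    have "d \<cdot> (e \<cdot> y) = d \<cdot> ((e \<cdot> j) \<cdot> u)" using ju assoc[OF u H(2) H(4)] by simp
    also have "\<dots> = d \<cdot> (i \<cdot> (j' \<cdot> u))" using H(5) assoc[OF u H(1) H(3)] by simp
    also have "\<dots> = (d \<cdot> i) \<cdot> (j' \<cdot> u)" using assoc[OF comp_hom[OF u H(1)] H(3) dh] .
    also have "\<dots> = \<zero> X (c_cod A d)" using ker_zero[OF ki] zero_comp[OF comp_hom[OF u H(1)] conjunct2[OF hom_ob[OF dh]]] by simp
    finally show "d \<cdot> (e \<cdot> y) = \<zero> X (c_cod A d)" .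
  next
    assume z: "d \<cdot> (e \<cdot> y) = \<zero> X (c_cod A d)"
    obtain w where w: "w \<in> hom A X (c_dom A i)" and iw: "i \<cdot> w = e \<cdot> y"
      using ker_factor[OF ki, of "e \<cdot> y" X] ey z homD[OF dh] by auto
    obtain u where u: "u \<in> hom A X (c_dom A j)" and "j' \<cdot> u = w" and ju: "j \<cdot> u = y"
      using pb_factor[OF pb w y iw] by blast
    have "d1 \<cdot> y = (d1 \<cdot> j) \<cdot> u" using ju assoc[OF u H(2) d1h] by simp
    also have "\<dots> = \<zero> X (c_cod A d1)" using cok_zero[OF ck] zero_comp[OF u conjunct2[OF hom_ob[OF d1h]]] by simp
    finally show "d1 \<cdot> y = \<zero> X (c_cod A d1)" .
  qed
qed


lemma part1_core:
  assumes se: "short_exact A i d" and pb: "is_pullback A j' j i e" and ck: "is_cokernel A d1 j"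
    and s: "s \<in> hom A M1 M" and t: "t \<in> hom A M M1" and ts: "t \<cdot> s = c_id A M1"
    and g1: "g1 \<in> hom A M1 (c_dom A e)"
    and kk: "is_kernel A k (d \<cdot> (e \<cdot> (g1 \<cdot> t)))" and kk1: "is_kernel A k1 (d1 \<cdot> g1)"
    and ksec: "is_section A k"
  shows "is_section A k1 \<and> (fully_invariant A k \<longrightarrow> fully_invariant A k1)"
proof -
  have ki: "is_kernel A i d" using se unfolding short_exact_def by blast
  have H: "j' \<in> hom A (c_dom A j) (c_dom A i)" "j \<in> hom A (c_dom A j) (c_dom A e)"
         "i \<in> hom A (c_dom A i) (c_cod A i)" "e \<in> hom A (c_dom A e) (c_cod A i)" "i \<cdot> j' = e \<cdot> j"
    using pb_homs[OF pb] by auto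
  have dh: "d \<in> hom A (c_cod A i) (c_cod A d)" by (rule ker_hom3[OF ki]) simp
  have d1h: "d1 \<in> hom A (c_dom A e) (c_cod A d1)" using cok_hom2[OF ck H(2)] .
  define G where "G = e \<cdot> (g1 \<cdot> t)"
  have g1t: "g1 \<cdot> t \<in> hom A M (c_dom A e)" using comp_hom t g1 by blast
  have G: "G \<in> hom A M (c_cod A i)" unfolding G_def using comp_hom g1t H(4) by blast
  have D: "d \<cdot> G \<in> hom A M (c_cod A d)" using comp_hom G dh by blast
  have kh: "k \<in> hom A (c_dom A k) M" using conjunct1[OF ker_homs[OF kk]] homD[OF D] unfolding G_def by simp
  have D1: "d1 \<cdot> g1 \<in> hom A M1 (c_cod A d1)" using comp_hom g1 d1h by blast
  have k1h: "k1 \<in> hom A (c_dom A k1) M1" using conjunct1[OF ker_homs[OF kk1]] homD[OF D1] by simp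
  define K where "K = c_dom A k"
  define K1 where "K1 = c_dom A k1"
  have kh: "k \<in> hom A K M" and k1h: "k1 \<in> hom A K1 M1" using kh k1h K_def K1_def by auto
  have K1o: "K1 \<in> c_ob A" and Ko: "K \<in> c_ob A" using hom_ob kh k1h by blast+
  have kk': "is_kernel A k (d \<cdot> G)" using kk G_def by simp
  have domD: "c_dom A (d \<cdot> G) = M" "c_cod A (d \<cdot> G) = c_cod A d" using homD[OF D] by auto
  have domD1: "c_dom A (d1 \<cdot> g1) = M1" "c_cod A (d1 \<cdot> g1) = c_cod A d1" using homD[OF D1] by auto
  have sk1: "s \<cdot> k1 \<in> hom A K1 M" using comp_hom k1h s by blast
  have "t \<cdot> (s \<cdot> k1) = (t \<cdot> s) \<cdot> k1" by (rule assoc[OF k1h s t])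
  also have "\<dots> = k1" by (simp only: ts id_l[OF k1h])
  finally have tsk1: "t \<cdot> (s \<cdot> k1) = k1" .
  have g1k1: "g1 \<cdot> k1 \<in> hom A K1 (c_dom A e)" using comp_hom k1h g1 by blast
  have "d1 \<cdot> (g1 \<cdot> k1) = (d1 \<cdot> g1) \<cdot> k1" using assoc[OF k1h g1 d1h] .
  also have "\<dots> = \<zero> K1 (c_cod A d1)" using ker_zero[OF kk1] unfolding K1_def domD1 .
  finally have "d1 \<cdot> (g1 \<cdot> k1) = \<zero> K1 (c_cod A d1)" .
  then have z1: "d \<cdot> (e \<cdot> (g1 \<cdot> k1)) = \<zero> K1 (c_cod A d)" using keq[OF se pb ck g1k1] by (rule iffD1[rotated])
  have "(d \<cdot> G) \<cdot> (s \<cdot> k1) = d \<cdot> (G \<cdot> (s \<cdot> k1))" using assoc[OF sk1 G dh] by (rule sym)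
  also have "\<dots> = d \<cdot> (e \<cdot> ((g1 \<cdot> t) \<cdot> (s \<cdot> k1)))" unfolding G_def using assoc[OF sk1 g1t H(4)] by (simp only:)
  also have "\<dots> = d \<cdot> (e \<cdot> (g1 \<cdot> (t \<cdot> (s \<cdot> k1))))" using assoc[OF sk1 t g1] by (simp only:)
  also have "\<dots> = d \<cdot> (e \<cdot> (g1 \<cdot> k1))" by (simp only: tsk1)
  also have "\<dots> = \<zero> K1 (c_cod A d)" by (rule z1)
  finally have "(d \<cdot> G) \<cdot> (s \<cdot> k1) = \<zero> K1 (c_cod A (d \<cdot> G))" unfolding domD .
  moreover have sk1': "s \<cdot> k1 \<in> hom A K1 (c_dom A (d \<cdot> G))" using sk1 unfolding domD .
  ultimately obtain u where u: "u \<in> hom A K1 K" and ku: "k \<cdot> u = s \<cdot> k1"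
    using ker_factor[OF kk' sk1'] unfolding K_def by blast
  have tk: "t \<cdot> k \<in> hom A K M1" using comp_hom kh t by blast
  have g1tk: "g1 \<cdot> (t \<cdot> k) \<in> hom A K (c_dom A e)" using comp_hom tk g1 by blast
  have "d \<cdot> (e \<cdot> (g1 \<cdot> (t \<cdot> k))) = d \<cdot> (e \<cdot> ((g1 \<cdot> t) \<cdot> k))" using assoc[OF kh t g1] by (simp only:)
  also have "\<dots> = d \<cdot> (G \<cdot> k)" unfolding G_def using assoc[OF kh g1t H(4)] by (simp only:)
  also have "\<dots> = (d \<cdot> G) \<cdot> k" by (rule assoc[OF kh G dh])
  also have "\<dots> = \<zero> K (c_cod A d)" using ker_zero[OF kk'] unfolding K_def domD .
  finally have "d \<cdot> (e \<cdot> (g1 \<cdot> (t \<cdot> k))) = \<zero> K (c_cod A d)" .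
  then have "d1 \<cdot> (g1 \<cdot> (t \<cdot> k)) = \<zero> K (c_cod A d1)" using keq[OF se pb ck g1tk] by (rule iffD2[rotated])
  moreover have "d1 \<cdot> (g1 \<cdot> (t \<cdot> k)) = (d1 \<cdot> g1) \<cdot> (t \<cdot> k)" using assoc[OF tk g1 d1h] .
  ultimately have "(d1 \<cdot> g1) \<cdot> (t \<cdot> k) = \<zero> K (c_cod A (d1 \<cdot> g1))" unfolding domD1 by simp
  moreover have tk': "t \<cdot> k \<in> hom A K (c_dom A (d1 \<cdot> g1))" using tk unfolding domD1 .
  ultimately obtain v where v: "v \<in> hom A K K1" and k1v: "k1 \<cdot> v = t \<cdot> k"
    using ker_factor[OF kk1 tk'] unfolding K1_def by blast
  have vu: "v \<cdot> u \<in> hom A K1 K1" using comp_hom u v by blast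
  have "k1 \<cdot> (v \<cdot> u) = (k1 \<cdot> v) \<cdot> u" by (rule assoc[OF u v k1h])
  also have "\<dots> = (t \<cdot> k) \<cdot> u" by (simp only: k1v)
  also have "\<dots> = t \<cdot> (k \<cdot> u)" by (rule assoc[OF u kh t, symmetric])
  also have "\<dots> = t \<cdot> (s \<cdot> k1)" by (simp only: ku)
  also have "\<dots> = k1" by (rule tsk1)
  also have "\<dots> = k1 \<cdot> c_id A K1" by (rule id_r[OF k1h, symmetric])
  finally have kvu: "k1 \<cdot> (v \<cdot> u) = k1 \<cdot> c_id A K1" .
  have vu': "v \<cdot> u \<in> hom A K1 (c_dom A k1)" using vu unfolding K1_def .
  have idh: "c_id A K1 \<in> hom A K1 (c_dom A k1)" using id_hom[OF K1o] unfolding K1_def .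
  have vuid: "v \<cdot> u = c_id A K1" by (rule ker_uniq[OF kk1 vu' idh kvu])
  obtain r where r: "r \<in> hom A M K" and rk: "r \<cdot> k = c_id A K"
    using ksec homD[OF kh] unfolding is_section_def K_def by auto
  have rs: "r \<cdot> s \<in> hom A M1 K" using comp_hom s r by blast
  have w: "v \<cdot> (r \<cdot> s) \<in> hom A M1 K1" using comp_hom rs v by blast
  have "(v \<cdot> (r \<cdot> s)) \<cdot> k1 = v \<cdot> ((r \<cdot> s) \<cdot> k1)" by (rule assoc[OF k1h rs v, symmetric])
  also have "\<dots> = v \<cdot> (r \<cdot> (s \<cdot> k1))" using assoc[OF k1h s r] by (simp only:)
  also have "\<dots> = v \<cdot> (r \<cdot> (k \<cdot> u))" by (simp only: ku)
  also have "\<dots> = v \<cdot> ((r \<cdot> k) \<cdot> u)" using assoc[OF u kh r] by (simp only:)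
  also have "\<dots> = v \<cdot> u" by (simp only: rk id_l[OF u])
  also have "\<dots> = c_id A K1" by (rule vuid)
  finally have "(v \<cdot> (r \<cdot> s)) \<cdot> k1 = c_id A (c_dom A k1)" unfolding K1_def .
  moreover have "v \<cdot> (r \<cdot> s) \<in> hom A (c_cod A k1) (c_dom A k1)" using w homD[OF k1h] unfolding K1_def by simp
  moreover have "k1 \<in> c_ar A" using homD[OF k1h] by simp
  ultimately have sec: "is_section A k1" unfolding is_section_def by blast
  have fi: "fully_invariant A k1" if fk: "fully_invariant A k"
  proof -
    have "\<forall>h \<in> hom A M1 M1. \<exists>\<alpha> \<in> hom A K1 K1. h \<cdot> k1 = k1 \<cdot> \<alpha>"
    proof
      fix h assume h: "h \<in> hom A M1 M1"
      have ht: "h \<cdot> t \<in> hom A M M1" using comp_hom t h by blast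
      have HH: "s \<cdot> (h \<cdot> t) \<in> hom A M M" using comp_hom ht s by blast
      have HH': "s \<cdot> (h \<cdot> t) \<in> hom A (c_cod A k) (c_cod A k)" using HH homD[OF kh] by simp
      obtain \<alpha> where a: "\<alpha> \<in> hom A K K" and ka: "(s \<cdot> (h \<cdot> t)) \<cdot> k = k \<cdot> \<alpha>"
        using fk HH' unfolding fully_invariant_def K_def by blast
      have au: "\<alpha> \<cdot> u \<in> hom A K1 K" using comp_hom u a by blast
      have vau: "v \<cdot> (\<alpha> \<cdot> u) \<in> hom A K1 K1" using comp_hom au v by blast
      have hk1: "h \<cdot> k1 \<in> hom A K1 M1" using comp_hom k1h h by blast
      have "k1 \<cdot> (v \<cdot> (\<alpha> \<cdot> u)) = (k1 \<cdot> v) \<cdot> (\<alpha> \<cdot> u)" by (rule assoc[OF au v k1h])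
      also have "\<dots> = (t \<cdot> k) \<cdot> (\<alpha> \<cdot> u)" by (simp only: k1v)
      also have "\<dots> = t \<cdot> (k \<cdot> (\<alpha> \<cdot> u))" by (rule assoc[OF au kh t, symmetric])
      also have "\<dots> = t \<cdot> ((k \<cdot> \<alpha>) \<cdot> u)" using assoc[OF u a kh] by (simp only:)
      also have "\<dots> = t \<cdot> (((s \<cdot> (h \<cdot> t)) \<cdot> k) \<cdot> u)" by (simp only: ka)
      also have "\<dots> = t \<cdot> ((s \<cdot> (h \<cdot> t)) \<cdot> (k \<cdot> u))" using assoc[OF u kh HH] by (simp only:)
      also have "\<dots> = t \<cdot> ((s \<cdot> (h \<cdot> t)) \<cdot> (s \<cdot> k1))" by (simp only: ku)
      also have "\<dots> = t \<cdot> (s \<cdot> ((h \<cdot> t) \<cdot> (s \<cdot> k1)))" using assoc[OF sk1 ht s] by (simp only:)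
      also have "\<dots> = t \<cdot> (s \<cdot> (h \<cdot> (t \<cdot> (s \<cdot> k1))))" using assoc[OF sk1 t h] by (simp only:)
      also have "\<dots> = t \<cdot> (s \<cdot> (h \<cdot> k1))" by (simp only: tsk1)
      also have "\<dots> = (t \<cdot> s) \<cdot> (h \<cdot> k1)" by (rule assoc[OF hk1 s t])
      also have "\<dots> = h \<cdot> k1" by (simp only: ts id_l[OF hk1])
      finally have "h \<cdot> k1 = k1 \<cdot> (v \<cdot> (\<alpha> \<cdot> u))" by (rule sym)
      then show "\<exists>\<alpha> \<in> hom A K1 K1. h \<cdot> k1 = k1 \<cdot> \<alpha>" using vau by blast
    qed
    then have "\<forall>h \<in> hom A (c_cod A k1) (c_cod A k1). \<exists>\<alpha> \<in> hom A (c_dom A k1) (c_dom A k1). h \<cdot> k1 = k1 \<cdot> \<alpha>"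
      using homD[OF k1h] unfolding K1_def by simp
    then show ?thesis unfolding fully_invariant_def using ker_mono[OF kk1] by blast
  qed
  show ?thesis using sec fi by blast
qed


lemma part1_setup:
  assumes se: "short_exact A i d"
    and s: "s \<in> hom A M1 M" and ss: "is_section A s"
    and pb: "is_pullback A j' j i e" and ck: "is_cokernel A d1 j"
    and g1: "g1 \<in> hom A M1 (c_dom A d1)"
  obtains t k where "t \<in> hom A M M1" "t \<cdot> s = c_id A M1" "g1 \<in> hom A M1 (c_dom A e)"
    "e \<cdot> (g1 \<cdot> t) \<in> hom A M (c_dom A d)" "is_kernel A k (d \<cdot> (e \<cdot> (g1 \<cdot> t)))"
proof -
  have ki: "is_kernel A i d" using se unfolding short_exact_def by blast
  have H: "j \<in> hom A (c_dom A j) (c_dom A e)" "e \<in> hom A (c_dom A e) (c_cod A i)"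
    using pb_homs[OF pb] by auto
  have "c_dom A d1 = c_dom A e" using cok_domeq[OF ck] homD[OF H(1)] by simp
  then have g1': "g1 \<in> hom A M1 (c_dom A e)" using g1 by simp
  obtain t where t: "t \<in> hom A (c_cod A s) (c_dom A s)" and ts: "t \<cdot> s = c_id A (c_dom A s)"
    using ss unfolding is_section_def by blast
  have t': "t \<in> hom A M M1" and ts': "t \<cdot> s = c_id A M1" using t ts homD[OF s] by auto
  have g: "e \<cdot> (g1 \<cdot> t) \<in> hom A M (c_dom A d)"
    using comp_hom[OF comp_hom[OF t' g1'] H(2)] ker_codeq[OF ki] by simp
  have dh: "d \<in> hom A (c_dom A d) (c_cod A d)" using conjunct2[OF ker_homs[OF ki]] .
  obtain k where "is_kernel A k (d \<cdot> (e \<cdot> (g1 \<cdot> t)))"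
    using ex_ker homD[OF comp_hom[OF g dh]] by blast
  then show ?thesis using that t' ts' g1' g by blast
qed

lemma part1_a:
  assumes se: "short_exact A i d" and S: "MF_split A M i d"
  shows "summand_cond MF_split A M i d"
  unfolding summand_cond_def MF_split_def
proof (intro allI impI ballI)
  fix M1 s N1 e j' j d1 g1 k1
  assume s: "s \<in> hom A M1 M" and ss: "is_section A s" and "e \<in> hom A N1 (c_cod A i)"
    and "is_section A e" and pb: "is_pullback A j' j i e" and ck: "is_cokernel A d1 j"
    and g1: "g1 \<in> hom A M1 (c_dom A d1)" and kk1: "is_kernel A k1 (c_comp A d1 g1)"
  obtain t k where t: "t \<in> hom A M M1" "t \<cdot> s = c_id A M1" and g1': "g1 \<in> hom A M1 (c_dom A e)"
    and g: "e \<cdot> (g1 \<cdot> t) \<in> hom A M (c_dom A d)" and kk: "is_kernel A k (d \<cdot> (e \<cdot> (g1 \<cdot> t)))"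
    using part1_setup[OF se s ss pb ck g1] by blast
  have "is_section A k" using S g kk unfolding MF_split_def by blast
  then show "is_section A k1" using part1_core[OF se pb ck s t g1' kk kk1] by blast
qed

lemma part1_b:
  assumes se: "short_exact A i d" and S: "strongly_MF_split A M i d"
  shows "summand_cond strongly_MF_split A M i d"
  unfolding summand_cond_def strongly_MF_split_def
proof (intro allI impI ballI)
  fix M1 s N1 e j' j d1 g1 k1
  assume s: "s \<in> hom A M1 M" and ss: "is_section A s" and "e \<in> hom A N1 (c_cod A i)"
    and "is_section A e" and pb: "is_pullback A j' j i e" and ck: "is_cokernel A d1 j"
    and g1: "g1 \<in> hom A M1 (c_dom A d1)" and kk1: "is_kernel A k1 (c_comp A d1 g1)"
  obtain t k where t: "t \<in> hom A M M1" "t \<cdot> s = c_id A M1" and g1': "g1 \<in> hom A M1 (c_dom A e)"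
    and g: "e \<cdot> (g1 \<cdot> t) \<in> hom A M (c_dom A d)" and kk: "is_kernel A k (d \<cdot> (e \<cdot> (g1 \<cdot> t)))"
    using part1_setup[OF se s ss pb ck g1] by blast
  have "is_section A k \<and> fully_invariant A k" using S g kk unfolding strongly_MF_split_def by blast
  then show "is_section A k1 \<and> fully_invariant A k1" using part1_core[OF se pb ck s t g1' kk kk1] by blast
qed


lemma id_section: "X \<in> c_ob A \<Longrightarrow> is_section A (c_id A X)"
proof -
  assume X: "X \<in> c_ob A"
  have h: "c_id A X \<in> hom A X X" using id_hom[OF X] .
  have "c_id A X \<cdot> c_id A X = c_id A X" using id_l[OF h] .
  then show ?thesis unfolding is_section_def using h homD[OF h] by auto
qed

lemma id_pullback: assumes i: "i \<in> hom A F N" shows "is_pullback A (c_id A F) i i (c_id A N)"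
proof -
  have F: "F \<in> c_ob A" and N: "N \<in> c_ob A" using hom_ob[OF i] by auto
  have iF: "c_id A F \<in> hom A F F" and iN: "c_id A N \<in> hom A N N" using id_hom F N by auto
  note hh = homD[OF iF] homD[OF iN] homD[OF i]
  have univ: "\<exists>!u. u \<in> hom A (c_dom A a) (c_dom A (c_id A F)) \<and> c_id A F \<cdot> u = a \<and> i \<cdot> u = b"
    if a: "a \<in> c_ar A" and b: "b \<in> c_ar A" and ab: "c_dom A a = c_dom A b" and ca: "c_cod A a = c_dom A i"
      and cb: "c_cod A b = c_dom A (c_id A N)" and e: "i \<cdot> a = c_id A N \<cdot> b" for a b
  proof -
    have ah: "a \<in> hom A (c_dom A a) F" using a ca hh homI by simp
    have bh: "b \<in> hom A (c_dom A a) N" using b cb ab hh homI by simp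
    have ia: "i \<cdot> a = b" using e id_l[OF bh] by simp
    show ?thesis
    proof (rule ex1I[where a = a])
      show "a \<in> hom A (c_dom A a) (c_dom A (c_id A F)) \<and> c_id A F \<cdot> a = a \<and> i \<cdot> a = b"
        using ah id_l[OF ah] ia hh by simp
    next
      fix u assume "u \<in> hom A (c_dom A a) (c_dom A (c_id A F)) \<and> c_id A F \<cdot> u = a \<and> i \<cdot> u = b"
      then show "u = a" using id_l[of u "c_dom A a" F] hh by simp
    qed
  qed
  show ?thesis unfolding is_pullback_def
    using hh id_l[OF i] id_r[OF i] univ by auto
qed

lemma id_cok_zero: assumes Z: "Z \<in> c_ob A" and X: "X \<in> c_ob A" shows "is_cokernel A (c_id A X) (\<zero> Z X)"
proof -
  have z: "\<zero> Z X \<in> hom A Z X" using zero_hom Z X by blast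
  have iX: "c_id A X \<in> hom A X X" using id_hom X by blast
  note hh = homD[OF z] homD[OF iX]
  have univ: "\<exists>!u. u \<in> hom A (c_cod A (c_id A X)) (c_cod A h) \<and> u \<cdot> c_id A X = h"
    if h: "h \<in> c_ar A" and dh: "c_dom A h = c_cod A (\<zero> Z X)" for h
  proof -
    have hh2: "h \<in> hom A X (c_cod A h)" using h dh hh homI by simp
    show ?thesis
    proof (rule ex1I[where a = h])
      show "h \<in> hom A (c_cod A (c_id A X)) (c_cod A h) \<and> h \<cdot> c_id A X = h"
        using hh2 id_r[OF hh2] hh by simp
    next
      fix u assume "u \<in> hom A (c_cod A (c_id A X)) (c_cod A h) \<and> u \<cdot> c_id A X = h"
      then show "u = h" using id_r[of u X "c_cod A h"] hh by simp
    qed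
  qed
  show ?thesis unfolding is_cokernel_def using hh id_l[OF z] univ by auto
qed

lemma zero_section: assumes Z: "Z \<in> c_ob A" and Zz: "c_id A Z = \<zero> Z Z" and X: "X \<in> c_ob A"
  shows "is_section A (\<zero> Z X)"
proof -
  have z: "\<zero> Z X \<in> hom A Z X" and z2: "\<zero> X Z \<in> hom A X Z" using zero_hom Z X by blast+
  have "\<zero> X Z \<cdot> \<zero> Z X = \<zero> Z Z" using zero_comp[OF z Z] .
  then show ?thesis unfolding is_section_def using z z2 homD[OF z] Zz by auto
qed

lemma rev1:
  assumes se: "short_exact A i d" and C: "summand_cond S A M i d" and M: "M \<in> c_ob A"
  shows "S A M i d"
proof -
  have ki: "is_kernel A i d" and ck: "is_cokernel A d i" using se unfolding short_exact_def by auto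
  have i: "i \<in> hom A (c_dom A i) (c_cod A i)" using ar_hom kerB[OF ki] by blast
  have N: "c_cod A i \<in> c_ob A" using hom_ob[OF i] by blast
  show ?thesis using C[unfolded summand_cond_def, rule_format, of "c_id A M" M "c_id A (c_cod A i)" "c_cod A i"
      "c_id A (c_dom A i)" i d] id_hom[OF M] id_hom[OF N] id_section[OF M] id_section[OF N]
      id_pullback[OF i] ck by blast
qed

lemma rev2:
  assumes se: "short_exact A i d" and C: "quotient_cond S A M i d" and M: "M \<in> c_ob A"
  shows "S A M i d"
proof -
  have ki: "is_kernel A i d" and ck: "is_cokernel A d i" using se unfolding short_exact_def by auto
  have i: "i \<in> hom A (c_dom A i) (c_cod A i)" using ar_hom kerB[OF ki] by blast
  have N: "c_cod A i \<in> c_ob A" using hom_ob[OF i] by blast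
  obtain Z where Z: "Z \<in> c_ob A" and Zz: "c_id A Z = \<zero> Z Z" using abZ by blast
  have ck': "is_cokernel A d (c_id A (c_cod A i) \<cdot> i)" using ck id_l[OF i] by simp
  have "S A (c_cod A (c_id A M)) i d"
    using C[unfolded quotient_cond_def, rule_format, of "\<zero> Z M" Z "c_id A M" "\<zero> Z (c_cod A i)" Z
      "c_id A (c_cod A i)" d i] zero_hom[OF Z M] zero_hom[OF Z N] zero_section[OF Z Zz M]
      zero_section[OF Z Zz N] id_cok_zero[OF Z M] id_cok_zero[OF Z N] ck' ki by blast
  then show ?thesis using homD[OF id_hom[OF M]] by simp
qed


lemma keq2:
  assumes qi: "qi \<in> hom A F Q" and ck: "is_cokernel A d' qi" and ki: "is_kernel A i' d'"
    and y: "y \<in> hom A Q X"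
  shows "y \<cdot> i' = \<zero> (c_dom A i') X \<longleftrightarrow> y \<cdot> qi = \<zero> F X"
proof -
  have d'h: "d' \<in> hom A Q (c_cod A d')" using cok_hom2[OF ck qi] .
  have dd: "c_dom A d' = Q" using homD[OF d'h] by simp
  have i'h: "i' \<in> hom A (c_dom A i') Q" using conjunct1[OF ker_homs[OF ki]] dd by simp
  have X: "X \<in> c_ob A" using hom_ob[OF y] by blast
  have F: "F \<in> c_ob A" using hom_ob[OF qi] by blast
  have I: "c_dom A i' \<in> c_ob A" using hom_ob[OF i'h] by blast
  have cdq: "c_dom A qi = F" using homD[OF qi] by simp
  show ?thesis
  proof
    assume z: "y \<cdot> i' = \<zero> (c_dom A i') X"
    have ep: "is_epi A d'" using cok_epi[OF ck] .
    obtain f where cf: "is_cokernel A d' f" using epi_cok[OF ep] by blast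
    have cdf: "c_cod A f = Q" using cok_domeq[OF cf] dd by simp
    have fh: "f \<in> hom A (c_dom A f) Q" using conjunct2[OF cok_homs[OF cf]] cdf by simp
    have fz: "d' \<cdot> f = \<zero> (c_dom A f) (c_cod A d')" using cok_zero[OF cf] .
    have fh': "f \<in> hom A (c_dom A f) (c_dom A d')" using fh dd by simp
    obtain u where u: "u \<in> hom A (c_dom A f) (c_dom A i')" and iu: "i' \<cdot> u = f"
      using ker_factor[OF ki fh' fz] by blast
    have "y \<cdot> f = y \<cdot> (i' \<cdot> u)" by (simp only: iu)
    also have "\<dots> = (y \<cdot> i') \<cdot> u" by (rule assoc[OF u i'h y])
    also have "\<dots> = \<zero> (c_dom A f) X" by (simp only: z zero_comp[OF u X])
    finally have yf: "y \<cdot> f = \<zero> (c_dom A f) X" .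
    have y': "y \<in> hom A (c_cod A f) X" using y cdf by simp
    obtain w where w: "w \<in> hom A (c_cod A d') X" and wd: "w \<cdot> d' = y"
      using cok_factor[OF cf y' yf] by blast
    have "y \<cdot> qi = (w \<cdot> d') \<cdot> qi" by (simp only: wd)
    also have "\<dots> = w \<cdot> (d' \<cdot> qi)" by (rule assoc[OF qi d'h w, symmetric])
    also have "\<dots> = \<zero> F X" by (simp only: cok_zero[OF ck] cdq comp_zero[OF w F])
    finally show "y \<cdot> qi = \<zero> F X" .
  next
    assume z: "y \<cdot> qi = \<zero> F X"
    have y': "y \<in> hom A (c_cod A qi) X" using y homD[OF qi] by simp
    obtain w where w: "w \<in> hom A (c_cod A d') X" and wd: "w \<cdot> d' = y"
      using cok_factor[OF ck y'] z cdq by auto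
    have "y \<cdot> i' = (w \<cdot> d') \<cdot> i'" by (simp only: wd)
    also have "\<dots> = w \<cdot> (d' \<cdot> i')" by (rule assoc[OF i'h d'h w, symmetric])
    also have "\<dots> = \<zero> (c_dom A i') X" by (simp only: ker_zero[OF ki] comp_zero[OF w I])
    finally show "y \<cdot> i' = \<zero> (c_dom A i') X" .
  qed
qed

lemma split_cok:
  assumes s: "s \<in> hom A M1 M" and t: "t \<in> hom A M M1" and ts: "t \<cdot> s = c_id A M1"
    and cq: "is_cokernel A qM s"
  obtains s' where "s' \<in> hom A (c_cod A qM) M" "qM \<cdot> s' = c_id A (c_cod A qM)"
proof -
  have M: "M \<in> c_ob A" and M1: "M1 \<in> c_ob A" using hom_ob[OF s] by auto
  have qh: "qM \<in> hom A M (c_cod A qM)" using cok_hom2[OF cq s] .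
  define MQ where "MQ = c_cod A qM"
  have qh: "qM \<in> hom A M MQ" using qh MQ_def by simp
  have MQ: "MQ \<in> c_ob A" using hom_ob[OF qh] by blast
  have st: "s \<cdot> t \<in> hom A M M" using comp_hom t s by blast
  have nst: "c_neg A (s \<cdot> t) \<in> hom A M M" using neg_hom st by blast
  have iM: "c_id A M \<in> hom A M M" using id_hom M by blast
  define x where "x = c_add A (c_id A M) (c_neg A (s \<cdot> t))"
  have x: "x \<in> hom A M M" unfolding x_def using add_hom iM nst by blast
  have sts: "(s \<cdot> t) \<cdot> s = s"
  proof -
    have "(s \<cdot> t) \<cdot> s = s \<cdot> (t \<cdot> s)" by (rule assoc[OF s t s, symmetric])
    also have "\<dots> = s" by (simp only: ts id_r[OF s])
    finally show ?thesis .
  qed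
  have "x \<cdot> s = c_add A (c_id A M \<cdot> s) (c_neg A (s \<cdot> t) \<cdot> s)" unfolding x_def by (rule distr[OF iM nst s])
  also have "\<dots> = c_add A s (c_neg A ((s \<cdot> t) \<cdot> s))" by (simp only: id_l[OF s] neg_comp[OF st s])
  also have "\<dots> = \<zero> M1 M" by (simp only: sts add_neg[OF s])
  finally have xs: "x \<cdot> s = \<zero> M1 M" .
  have x': "x \<in> hom A (c_cod A s) M" using x homD[OF s] by simp
  have xs': "x \<cdot> s = \<zero> (c_dom A s) M" using xs homD[OF s] by simp
  obtain s' where s': "s' \<in> hom A MQ M" and sq: "s' \<cdot> qM = x"
    using cok_factor[OF cq x' xs'] unfolding MQ_def by blast
  have qsq: "(qM \<cdot> s') \<cdot> qM = c_id A MQ \<cdot> qM"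
  proof -
    have "(qM \<cdot> s') \<cdot> qM = qM \<cdot> (s' \<cdot> qM)" by (rule assoc[OF qh s' qh, symmetric])
    also have "\<dots> = qM \<cdot> x" by (simp only: sq)
    also have "\<dots> = c_add A (qM \<cdot> c_id A M) (qM \<cdot> c_neg A (s \<cdot> t))" unfolding x_def by (rule distl[OF iM nst qh])
    also have "\<dots> = c_add A qM (c_neg A ((qM \<cdot> s) \<cdot> t))"
      by (simp only: id_r[OF qh] comp_neg[OF st qh] assoc[OF t s qh])
    also have "(qM \<cdot> s) = \<zero> M1 MQ" using cok_zero[OF cq] homD[OF s] unfolding MQ_def by simp
    also have "\<zero> M1 MQ \<cdot> t = \<zero> M MQ" by (rule zero_comp[OF t MQ])
    also have "c_neg A (\<zero> M MQ) = \<zero> M MQ" by (rule neg_zero[OF M MQ])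
    also have "c_add A qM (\<zero> M MQ) = qM" by (rule add_zero[OF qh])
    also have "qM = c_id A MQ \<cdot> qM" by (rule id_l[OF qh, symmetric])
    finally show ?thesis .
  qed
  have qs: "qM \<cdot> s' \<in> hom A (c_cod A qM) MQ" using comp_hom s' qh MQ_def by simp
  have idq: "c_id A MQ \<in> hom A (c_cod A qM) MQ" using id_hom MQ MQ_def by simp
  have "qM \<cdot> s' = c_id A MQ" by (rule cok_uniq[OF cq qs idq qsq])
  then show ?thesis using that s' MQ_def by simp
qed


lemma part2_core:
  assumes i: "i \<in> hom A F N" and q: "q \<in> hom A N Q"
    and ck': "is_cokernel A d' (q \<cdot> i)" and ki': "is_kernel A i' d'"
    and qM: "qM \<in> hom A M MQ" and s': "s' \<in> hom A MQ M" and qs: "qM \<cdot> s' = c_id A MQ"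
    and g': "g' \<in> hom A Q MQ"
    and cc: "is_cokernel A c (g' \<cdot> i')" and cc0: "is_cokernel A c0 ((s' \<cdot> (g' \<cdot> q)) \<cdot> i)"
    and rsec: "is_retraction A c0"
  shows "is_retraction A c \<and> (fully_coinvariant A c0 \<longrightarrow> fully_coinvariant A c)"
proof -
  define qi where "qi = q \<cdot> i"
  have qih: "qi \<in> hom A F Q" unfolding qi_def using comp_hom i q by blast
  have ck: "is_cokernel A d' qi" using ck' unfolding qi_def .
  define G where "G = s' \<cdot> (g' \<cdot> q)"
  have gq: "g' \<cdot> q \<in> hom A N MQ" using comp_hom q g' by blast
  have G: "G \<in> hom A N M" unfolding G_def using comp_hom gq s' by blast
  have Gi: "G \<cdot> i \<in> hom A F M" using comp_hom i G by blast
  have cc0': "is_cokernel A c0 (G \<cdot> i)" using cc0 unfolding G_def .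
  have d'h: "d' \<in> hom A Q (c_cod A d')" using cok_hom2[OF ck qih] .
  have i'h: "i' \<in> hom A (c_dom A i') Q" using conjunct1[OF ker_homs[OF ki']] homD[OF d'h] by simp
  define I where "I = c_dom A i'"
  have i'h: "i' \<in> hom A I Q" using i'h I_def by simp
  have gi: "g' \<cdot> i' \<in> hom A I MQ" using comp_hom i'h g' by blast
  define C0 where "C0 = c_cod A c0"
  define C1 where "C1 = c_cod A c"
  have c0h: "c0 \<in> hom A M C0" using cok_hom2[OF cc0' Gi] unfolding C0_def .
  have ch: "c \<in> hom A MQ C1" using cok_hom2[OF cc gi] unfolding C1_def .
  have C0: "C0 \<in> c_ob A" and C1: "C1 \<in> c_ob A" using hom_ob c0h ch by blast+
  have Mo: "M \<in> c_ob A" and MQo: "MQ \<in> c_ob A" using hom_ob qM by blast+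
  have E1: "qM \<cdot> G = g' \<cdot> q"
  proof -
    have "qM \<cdot> G = (qM \<cdot> s') \<cdot> (g' \<cdot> q)" unfolding G_def by (rule assoc[OF gq s' qM])
    also have "\<dots> = g' \<cdot> q" by (simp only: qs id_l[OF gq])
    finally show ?thesis .
  qed
  have E2: "qM \<cdot> (G \<cdot> i) = g' \<cdot> qi"
  proof -
    have "qM \<cdot> (G \<cdot> i) = (qM \<cdot> G) \<cdot> i" by (rule assoc[OF i G qM])
    also have "\<dots> = (g' \<cdot> q) \<cdot> i" by (simp only: E1)
    also have "\<dots> = g' \<cdot> qi" unfolding qi_def by (rule assoc[OF i q g', symmetric])
    finally show ?thesis .
  qed
  have E3: "G \<cdot> i = s' \<cdot> (g' \<cdot> qi)"
  proof -
    have "G \<cdot> i = s' \<cdot> ((g' \<cdot> q) \<cdot> i)" unfolding G_def by (rule assoc[OF i gq s', symmetric])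
    also have "\<dots> = s' \<cdot> (g' \<cdot> qi)" unfolding qi_def using assoc[OF i q g'] by (simp only:)
    finally show ?thesis .
  qed
  have cg: "c \<cdot> g' \<in> hom A Q C1" using comp_hom g' ch by blast
  have "(c \<cdot> g') \<cdot> i' = c \<cdot> (g' \<cdot> i')" by (rule assoc[OF i'h g' ch, symmetric])
  also have "\<dots> = \<zero> I C1" using cok_zero[OF cc] homD[OF gi] unfolding C1_def by simp
  finally have "(c \<cdot> g') \<cdot> i' = \<zero> (c_dom A i') C1" unfolding I_def .
  then have z1: "(c \<cdot> g') \<cdot> qi = \<zero> F C1" using keq2[OF qih ck ki' cg] by simp
  have cq: "c \<cdot> qM \<in> hom A M C1" using comp_hom qM ch by blast
  have "(c \<cdot> qM) \<cdot> (G \<cdot> i) = c \<cdot> (qM \<cdot> (G \<cdot> i))" by (rule assoc[OF Gi qM ch, symmetric])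
  also have "\<dots> = c \<cdot> (g' \<cdot> qi)" by (simp only: E2)
  also have "\<dots> = (c \<cdot> g') \<cdot> qi" by (rule assoc[OF qih g' ch])
  also have "\<dots> = \<zero> F C1" by (rule z1)
  finally have "(c \<cdot> qM) \<cdot> (G \<cdot> i) = \<zero> (c_dom A (G \<cdot> i)) C1" using homD[OF Gi] by simp
  moreover have "c \<cdot> qM \<in> hom A (c_cod A (G \<cdot> i)) C1" using cq homD[OF Gi] by simp
  ultimately obtain u where u: "u \<in> hom A C0 C1" and uc0: "u \<cdot> c0 = c \<cdot> qM"
    using cok_factor[OF cc0'] unfolding C0_def by blast
  have cs: "c0 \<cdot> s' \<in> hom A MQ C0" using comp_hom s' c0h by blast
  have y: "(c0 \<cdot> s') \<cdot> g' \<in> hom A Q C0" using comp_hom g' cs by blast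
  have gqi: "g' \<cdot> qi \<in> hom A F MQ" using comp_hom qih g' by blast
  have "((c0 \<cdot> s') \<cdot> g') \<cdot> qi = (c0 \<cdot> s') \<cdot> (g' \<cdot> qi)" by (rule assoc[OF qih g' cs, symmetric])
  also have "\<dots> = c0 \<cdot> (s' \<cdot> (g' \<cdot> qi))" by (rule assoc[OF gqi s' c0h, symmetric])
  also have "\<dots> = c0 \<cdot> (G \<cdot> i)" by (simp only: E3)
  also have "\<dots> = \<zero> F C0" using cok_zero[OF cc0'] homD[OF Gi] unfolding C0_def by simp
  finally have "((c0 \<cdot> s') \<cdot> g') \<cdot> qi = \<zero> F C0" .
  then have "((c0 \<cdot> s') \<cdot> g') \<cdot> i' = \<zero> (c_dom A i') C0" using keq2[OF qih ck ki' y] by simp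
  then have "(c0 \<cdot> s') \<cdot> (g' \<cdot> i') = \<zero> I C0" using assoc[OF i'h g' cs] unfolding I_def by simp
  then have "(c0 \<cdot> s') \<cdot> (g' \<cdot> i') = \<zero> (c_dom A (g' \<cdot> i')) C0" using homD[OF gi] by simp
  moreover have "c0 \<cdot> s' \<in> hom A (c_cod A (g' \<cdot> i')) C0" using cs homD[OF gi] by simp
  ultimately obtain v where v: "v \<in> hom A C1 C0" and vc: "v \<cdot> c = c0 \<cdot> s'"
    using cok_factor[OF cc] unfolding C1_def by blast
  have uv: "u \<cdot> v \<in> hom A C1 C1" using comp_hom v u by blast
  have "(u \<cdot> v) \<cdot> c = u \<cdot> (v \<cdot> c)" by (rule assoc[OF ch v u, symmetric])
  also have "\<dots> = u \<cdot> (c0 \<cdot> s')" by (simp only: vc)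
  also have "\<dots> = (u \<cdot> c0) \<cdot> s'" by (rule assoc[OF s' c0h u])
  also have "\<dots> = (c \<cdot> qM) \<cdot> s'" by (simp only: uc0)
  also have "\<dots> = c \<cdot> (qM \<cdot> s')" by (rule assoc[OF s' qM ch, symmetric])
  also have "\<dots> = c" by (simp only: qs id_r[OF ch])
  also have "\<dots> = c_id A C1 \<cdot> c" by (rule id_l[OF ch, symmetric])
  finally have uvc: "(u \<cdot> v) \<cdot> c = c_id A C1 \<cdot> c" .
  have uv': "u \<cdot> v \<in> hom A (c_cod A c) C1" using uv unfolding C1_def .
  have idc: "c_id A C1 \<in> hom A (c_cod A c) C1" using id_hom[OF C1] unfolding C1_def .
  have uvid: "u \<cdot> v = c_id A C1" by (rule cok_uniq[OF cc uv' idc uvc])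
  obtain r where r: "r \<in> hom A C0 M" and c0r: "c0 \<cdot> r = c_id A C0"
    using rsec homD[OF c0h] unfolding is_retraction_def C0_def by auto
  have rv: "r \<cdot> v \<in> hom A C1 M" using comp_hom v r by blast
  have t': "qM \<cdot> (r \<cdot> v) \<in> hom A C1 MQ" using comp_hom rv qM by blast
  have "c \<cdot> (qM \<cdot> (r \<cdot> v)) = (c \<cdot> qM) \<cdot> (r \<cdot> v)" by (rule assoc[OF rv qM ch])
  also have "\<dots> = (u \<cdot> c0) \<cdot> (r \<cdot> v)" by (simp only: uc0)
  also have "\<dots> = u \<cdot> (c0 \<cdot> (r \<cdot> v))" by (rule assoc[OF rv c0h u, symmetric])
  also have "\<dots> = u \<cdot> ((c0 \<cdot> r) \<cdot> v)" using assoc[OF v r c0h] by (simp only:)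
  also have "\<dots> = u \<cdot> v" by (simp only: c0r id_l[OF v])
  also have "\<dots> = c_id A C1" by (rule uvid)
  finally have "c \<cdot> (qM \<cdot> (r \<cdot> v)) = c_id A (c_cod A c)" unfolding C1_def .
  moreover have "qM \<cdot> (r \<cdot> v) \<in> hom A (c_cod A c) (c_dom A c)" using t' homD[OF ch] unfolding C1_def by simp
  moreover have "c \<in> c_ar A" using homD[OF ch] by simp
  ultimately have ret: "is_retraction A c" unfolding is_retraction_def by blast
  have fc: "fully_coinvariant A c" if fk: "fully_coinvariant A c0"
  proof -
    have "\<forall>h \<in> hom A MQ MQ. \<exists>\<beta> \<in> hom A C1 C1. c \<cdot> h = \<beta> \<cdot> c"
    proof
      fix h assume h: "h \<in> hom A MQ MQ"
      have hq: "h \<cdot> qM \<in> hom A M MQ" using comp_hom qM h by blast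
      have HH: "s' \<cdot> (h \<cdot> qM) \<in> hom A M M" using comp_hom hq s' by blast
      have HH': "s' \<cdot> (h \<cdot> qM) \<in> hom A (c_dom A c0) (c_dom A c0)" using HH homD[OF c0h] by simp
      obtain \<beta> where b: "\<beta> \<in> hom A C0 C0" and cb: "c0 \<cdot> (s' \<cdot> (h \<cdot> qM)) = \<beta> \<cdot> c0"
        using fk HH' unfolding fully_coinvariant_def C0_def by blast
      have bv: "\<beta> \<cdot> v \<in> hom A C1 C0" using comp_hom v b by blast
      have ubv: "u \<cdot> (\<beta> \<cdot> v) \<in> hom A C1 C1" using comp_hom bv u by blast
      have sh: "s' \<cdot> h \<in> hom A MQ M" using comp_hom h s' by blast
      have Hs: "(s' \<cdot> (h \<cdot> qM)) \<cdot> s' = s' \<cdot> h"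
      proof -
        have "(s' \<cdot> (h \<cdot> qM)) \<cdot> s' = s' \<cdot> ((h \<cdot> qM) \<cdot> s')" by (rule assoc[OF s' hq s', symmetric])
        also have "\<dots> = s' \<cdot> (h \<cdot> (qM \<cdot> s'))" using assoc[OF s' qM h] by (simp only:)
        also have "\<dots> = s' \<cdot> h" by (simp only: qs id_r[OF h])
        finally show ?thesis .
      qed
      have "(u \<cdot> (\<beta> \<cdot> v)) \<cdot> c = u \<cdot> ((\<beta> \<cdot> v) \<cdot> c)" by (rule assoc[OF ch bv u, symmetric])
      also have "\<dots> = u \<cdot> (\<beta> \<cdot> (v \<cdot> c))" using assoc[OF ch v b] by (simp only:)
      also have "\<dots> = u \<cdot> (\<beta> \<cdot> (c0 \<cdot> s'))" by (simp only: vc)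
      also have "\<dots> = u \<cdot> ((\<beta> \<cdot> c0) \<cdot> s')" using assoc[OF s' c0h b] by (simp only:)
      also have "\<dots> = u \<cdot> ((c0 \<cdot> (s' \<cdot> (h \<cdot> qM))) \<cdot> s')" by (simp only: cb)
      also have "\<dots> = u \<cdot> (c0 \<cdot> ((s' \<cdot> (h \<cdot> qM)) \<cdot> s'))" using assoc[OF s' HH c0h] by (simp only:)
      also have "\<dots> = u \<cdot> (c0 \<cdot> (s' \<cdot> h))" by (simp only: Hs)
      also have "\<dots> = (u \<cdot> c0) \<cdot> (s' \<cdot> h)" by (rule assoc[OF sh c0h u])
      also have "\<dots> = (c \<cdot> qM) \<cdot> (s' \<cdot> h)" by (simp only: uc0)
      also have "\<dots> = c \<cdot> (qM \<cdot> (s' \<cdot> h))" by (rule assoc[OF sh qM ch, symmetric])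
      also have "\<dots> = c \<cdot> ((qM \<cdot> s') \<cdot> h)" using assoc[OF h s' qM] by (simp only:)
      also have "\<dots> = c \<cdot> h" by (simp only: qs id_l[OF h])
      finally have "c \<cdot> h = (u \<cdot> (\<beta> \<cdot> v)) \<cdot> c" by (rule sym)
      then show "\<exists>\<beta> \<in> hom A C1 C1. c \<cdot> h = \<beta> \<cdot> c" using ubv by blast
    qed
    then have "\<forall>h \<in> hom A (c_dom A c) (c_dom A c). \<exists>\<beta> \<in> hom A (c_cod A c) (c_cod A c). c \<cdot> h = \<beta> \<cdot> c"
      using homD[OF ch] unfolding C1_def by simp
    then show ?thesis unfolding fully_coinvariant_def using cok_epi[OF cc] by blast
  qed
  show ?thesis using ret fc by blast
qed


lemma part2_setup:
  assumes se: "short_exact A i d"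
    and s: "s \<in> hom A M1 M" and ss: "is_section A s" and cqM: "is_cokernel A qM s"
    and e: "e \<in> hom A N1 (c_cod A i)" and cq: "is_cokernel A q e"
    and cd': "is_cokernel A d' (q \<cdot> i)" and ki': "is_kernel A i' d'"
    and g': "g' \<in> hom A (c_cod A i') (c_cod A qM)"
  obtains s' c0 where "i \<in> hom A (c_dom A i) (c_cod A i)" "q \<in> hom A (c_cod A i) (c_cod A q)"
    "qM \<in> hom A M (c_cod A qM)" "s' \<in> hom A (c_cod A qM) M" "qM \<cdot> s' = c_id A (c_cod A qM)"
    "g' \<in> hom A (c_cod A q) (c_cod A qM)" "s' \<cdot> (g' \<cdot> q) \<in> hom A (c_cod A i) M"
    "is_cokernel A c0 ((s' \<cdot> (g' \<cdot> q)) \<cdot> i)"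
proof -
  have ki: "is_kernel A i d" using se unfolding short_exact_def by blast
  have i: "i \<in> hom A (c_dom A i) (c_cod A i)" using ar_hom kerB[OF ki] by blast
  have q: "q \<in> hom A (c_cod A i) (c_cod A q)" using cok_hom2[OF cq e] .
  obtain t where t: "t \<in> hom A (c_cod A s) (c_dom A s)" and ts: "t \<cdot> s = c_id A (c_dom A s)"
    using ss unfolding is_section_def by blast
  have t': "t \<in> hom A M M1" and ts': "t \<cdot> s = c_id A M1" using t ts homD[OF s] by auto
  obtain s' where s': "s' \<in> hom A (c_cod A qM) M" and qs: "qM \<cdot> s' = c_id A (c_cod A qM)"
    using split_cok[OF s t' ts' cqM] by blast
  have qM: "qM \<in> hom A M (c_cod A qM)" using cok_hom2[OF cqM s] .
  have qi: "q \<cdot> i \<in> hom A (c_dom A i) (c_cod A q)" using comp_hom i q by blast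
  have "c_cod A i' = c_cod A q" using ker_codeq[OF ki'] cok_domeq[OF cd'] homD[OF qi] by simp
  then have g'': "g' \<in> hom A (c_cod A q) (c_cod A qM)" using g' by simp
  have G: "s' \<cdot> (g' \<cdot> q) \<in> hom A (c_cod A i) M" using comp_hom[OF comp_hom[OF q g''] s'] .
  obtain c0 where "is_cokernel A c0 ((s' \<cdot> (g' \<cdot> q)) \<cdot> i)"
    using ex_cok homD[OF comp_hom[OF i G]] by blast
  then show ?thesis using that i q qM s' qs g'' G by blast
qed

lemma part2_a:
  assumes se: "short_exact A i d" and S: "dual_MF_split A M i d"
  shows "quotient_cond dual_MF_split A M i d"
  unfolding quotient_cond_def dual_MF_split_def
proof (intro allI impI ballI)
  fix M1 s qM N1 e q d' i' g' c
  assume s: "s \<in> hom A M1 M" and ss: "is_section A s" and cqM: "is_cokernel A qM s"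
    and e: "e \<in> hom A N1 (c_cod A i)" and "is_section A e" and cq: "is_cokernel A q e"
    and cd': "is_cokernel A d' (q \<cdot> i)" and ki': "is_kernel A i' d'"
    and g': "g' \<in> hom A (c_cod A i') (c_cod A qM)" and cc: "is_cokernel A c (g' \<cdot> i')"
  obtain s' c0 where i: "i \<in> hom A (c_dom A i) (c_cod A i)" and q: "q \<in> hom A (c_cod A i) (c_cod A q)"
    and qM: "qM \<in> hom A M (c_cod A qM)" and s': "s' \<in> hom A (c_cod A qM) M"
    and qs: "qM \<cdot> s' = c_id A (c_cod A qM)"
    and g'': "g' \<in> hom A (c_cod A q) (c_cod A qM)" and G: "s' \<cdot> (g' \<cdot> q) \<in> hom A (c_cod A i) M"
    and cc0: "is_cokernel A c0 ((s' \<cdot> (g' \<cdot> q)) \<cdot> i)"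
    using part2_setup[OF se s ss cqM e cq cd' ki' g'] by blast
  have "is_retraction A c0" using S G cc0 unfolding dual_MF_split_def by blast
  then show "is_retraction A c" using part2_core[OF i q cd' ki' qM s' qs g'' cc cc0] by blast
qed

lemma part2_b:
  assumes se: "short_exact A i d" and S: "dual_strongly_MF_split A M i d"
  shows "quotient_cond dual_strongly_MF_split A M i d"
  unfolding quotient_cond_def dual_strongly_MF_split_def
proof (intro allI impI ballI)
  fix M1 s qM N1 e q d' i' g' c
  assume s: "s \<in> hom A M1 M" and ss: "is_section A s" and cqM: "is_cokernel A qM s"
    and e: "e \<in> hom A N1 (c_cod A i)" and "is_section A e" and cq: "is_cokernel A q e"
    and cd': "is_cokernel A d' (q \<cdot> i)" and ki': "is_kernel A i' d'"
    and g': "g' \<in> hom A (c_cod A i') (c_cod A qM)" and cc: "is_cokernel A c (g' \<cdot> i')"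
  obtain s' c0 where i: "i \<in> hom A (c_dom A i) (c_cod A i)" and q: "q \<in> hom A (c_cod A i) (c_cod A q)"
    and qM: "qM \<in> hom A M (c_cod A qM)" and s': "s' \<in> hom A (c_cod A qM) M"
    and qs: "qM \<cdot> s' = c_id A (c_cod A qM)"
    and g'': "g' \<in> hom A (c_cod A q) (c_cod A qM)" and G: "s' \<cdot> (g' \<cdot> q) \<in> hom A (c_cod A i) M"
    and cc0: "is_cokernel A c0 ((s' \<cdot> (g' \<cdot> q)) \<cdot> i)"
    using part2_setup[OF se s ss cqM e cq cd' ki' g'] by blast
  have "is_retraction A c0 \<and> fully_coinvariant A c0" using S G cc0 unfolding dual_strongly_MF_split_def by blast
  then show "is_retraction A c \<and> fully_coinvariant A c" using part2_core[OF i q cd' ki' qM s' qs g'' cc cc0] by blast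
qed

end

theorem corollary3p9:
  fixes A :: "('o, 'm) acat" and M :: 'o and i d :: 'm
  assumes "abelian A" and "M \<in> c_ob A" and "fi_short_exact A i d"
  shows "(MF_split A M i d \<longleftrightarrow> summand_cond MF_split A M i d) \<and>
         (strongly_MF_split A M i d \<longleftrightarrow> summand_cond strongly_MF_split A M i d) \<and>
         (dual_MF_split A M i d \<longleftrightarrow> quotient_cond dual_MF_split A M i d) \<and>
         (dual_strongly_MF_split A M i d \<longleftrightarrow> quotient_cond dual_strongly_MF_split A M i d)"
proof -
  have pa: "is_preadditive A" using assms(1) unfolding abelian_def by blast
  interpret ab A by unfold_locales (fact pa, fact assms(1))
  have se: "short_exact A i d" using assms(3) unfolding fi_short_exact_def by blast
  show ?thesis
    using part1_a[OF se] part1_b[OF se] part2_a[OF se] part2_b[OF se]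
      rev1[OF se _ assms(2)] rev2[OF se _ assms(2)] by blast
qed

end
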